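(* (1) For every $\lambda\neq0$, the determinant of the matrix $$\begin{pmatrix} i\widetilde v_s^*(\lambda)/\lambda & \widetilde v_d^*(\lambda)/\lambda^2 & 1+i\alpha m(\lambda)/\lambda^2\\ 1-c(i\lambda l) & i s(i\lambda l)/\lambda & -\frac{\alpha}{\lambda}\int_0^l s(i\lambda(l-t))v(t)\,dt\\ i s(i\lambda l)/\lambda & d(i\lambda l)/\lambda^2 & \frac{i\alpha}{\lambda^2}\int_0^l d(i\lambda(l-t))v(t)\,dt\end{pmatrix}$$ (the coefficient matrix of the linear system for the unknowns $y'(0)$, $y''(0)$-type constants and $\langle y,v\rangle$ expressing that a solution of $L_\alpha y=\lambda^3 y$ with $y(0)=0$ satisfies $y'(0)=y'(l)$, $y(l)=0$) equals $$\Delta(\alpha,\lambda)=\Delta(0,\lambda)+\frac{i\alpha}{\lambda^4}\big(F(\lambda)-F^*(\lambda)\big).$$ (2) $\Delta(\alpha,\cdot)$ extends to an entire function of exponential type satisfying $\Delta(\alpha,\zeta_2\lambda)=\Delta(\alpha,\lambda)$ and $\Delta^*(\alpha,\lambda)=\Delta(\alpha,\lambda)$ for all $\lambda\in\mathbb C$.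
   Context: Let $\zeta_1=1$, $\zeta_2=-\frac12+\frac{\sqrt3}{2}i$, $\zeta_3=-\frac12-\frac{\sqrt3}{2}i$; $c(z)=\frac13\sum_k e^{z\zeta_k}$, $s(z)=\frac13\sum_k\zeta_k^{-1}e^{z\zeta_k}$, $d(z)=\frac13\sum_k\zeta_k^{-2}e^{z\zeta_k}$. Fix $0<l<\infty$, $\alpha\in\mathbb R$, $v\in L^2(0,l)$. $L_\alpha$ is the operator in $L^2(0,l)$, $(L_\alpha y)(x)=iy'''(x)+\alpha\left(\int_0^l y(t)\overline{v(t)}dt\right)v(x)$, with domain $\{y\in W^{3,2}(0,l): y(0)=0,\ y'(0)=y'(l),\ y(l)=0\}$. $\Delta(0,\lambda)=\lambda^{-2}(d(i\lambda l)+d(-i\lambda l))$. For entire $f$, $f^*(\lambda)=\overline{f(\overline\lambda)}$. $\widetilde v_c(\lambda)=\int_0^l v(x)c(-i\lambda x)dx$, $\widetilde v_s(\lambda)=\int_0^l v(x)s(-i\lambda x)dx$, $\widetilde v_d(\lambda)=\int_0^l v(x)d(-i\lambda x)dx$; $m(\lambda)=\int_0^l\overline{v(x)}\int_0^x d(i\lambda(x-t))v(t)\,dt\,dx$. Let $w(x)=v(l-x)$ and $\widetilde w_d(\lambda)=\int_0^l w(x)d(-i\lambda x)dx$, so that $\widetilde w_d^*(-\lambda)=\int_0^l\overline{v(t)}\,d(i\lambda(t-l))\,dt$. Define $F(\lambda)=m(\lambda)d(i\lambda l)+\widetilde v_d(\lambda)\widetilde w_d^*(-\lambda)$. *)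

theory Defs
  imports "HOL-Analysis.Analysis"
begin

definition zeta1 :: complex where "zeta1 = 1"
definition zeta2 :: complex where "zeta2 = Complex (-1/2) (sqrt 3 / 2)"
definition zeta3 :: complex where "zeta3 = Complex (-1/2) (- sqrt 3 / 2)"

definition cfun :: "complex \<Rightarrow> complex" where
  "cfun z = (exp (z * zeta1) + exp (z * zeta2) + exp (z * zeta3)) / 3"
definition sfun :: "complex \<Rightarrow> complex" where
  "sfun z = (inverse zeta1 * exp (z * zeta1) + inverse zeta2 * exp (z * zeta2)
             + inverse zeta3 * exp (z * zeta3)) / 3"
definition dfun :: "complex \<Rightarrow> complex" where
  "dfun z = (inverse (zeta1^2) * exp (z * zeta1) + inverse (zeta2^2) * exp (z * zeta2)
             + inverse (zeta3^2) * exp (z * zeta3)) / 3"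

definition star :: "(complex \<Rightarrow> complex) \<Rightarrow> complex \<Rightarrow> complex" where
  "star f z = cnj (f (cnj z))"

definition Delta0 :: "real \<Rightarrow> complex \<Rightarrow> complex" where
  "Delta0 l z = (dfun (\<i> * z * l) + dfun (- \<i> * z * l)) / z^2"

definition vc :: "real \<Rightarrow> (real \<Rightarrow> complex) \<Rightarrow> complex \<Rightarrow> complex" where
  "vc l v z = (LINT x:{0..l}|lborel. v x * cfun (- \<i> * z * x))"
definition vs :: "real \<Rightarrow> (real \<Rightarrow> complex) \<Rightarrow> complex \<Rightarrow> complex" where
  "vs l v z = (LINT x:{0..l}|lborel. v x * sfun (- \<i> * z * x))"
definition vd :: "real \<Rightarrow> (real \<Rightarrow> complex) \<Rightarrow> complex \<Rightarrow> complex" where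
  "vd l v z = (LINT x:{0..l}|lborel. v x * dfun (- \<i> * z * x))"

definition mfun :: "real \<Rightarrow> (real \<Rightarrow> complex) \<Rightarrow> complex \<Rightarrow> complex" where
  "mfun l v z = (LINT x:{0..l}|lborel. cnj (v x) *
                   (LINT t:{0..x}|lborel. dfun (\<i> * z * (x - t)) * v t))"

definition wd :: "real \<Rightarrow> (real \<Rightarrow> complex) \<Rightarrow> complex \<Rightarrow> complex" where
  "wd l v z = vd l (\<lambda>x. v (l - x)) z"

definition Ffun :: "real \<Rightarrow> (real \<Rightarrow> complex) \<Rightarrow> complex \<Rightarrow> complex" where
  "Ffun l v z = mfun l v z * dfun (\<i> * z * l) + vd l v z * star (wd l v) (- z)"

definition Delta :: "real \<Rightarrow> (real \<Rightarrow> complex) \<Rightarrow> real \<Rightarrow> complex \<Rightarrow> complex" where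
  "Delta l v \<alpha> z = Delta0 l z + \<i> * \<alpha> / z^4 * (Ffun l v z - star (Ffun l v) z)"

definition coeff_matrix :: "real \<Rightarrow> (real \<Rightarrow> complex) \<Rightarrow> real \<Rightarrow> complex \<Rightarrow> complex^3^3" where
  "coeff_matrix l v \<alpha> z = vector [
     vector [\<i> * star (vs l v) z / z, star (vd l v) z / z^2, 1 + \<i> * \<alpha> * mfun l v z / z^2],
     vector [1 - cfun (\<i> * z * l), \<i> * sfun (\<i> * z * l) / z,
             - (\<alpha> / z) * (LINT t:{0..l}|lborel. sfun (\<i> * z * (l - t)) * v t)],
     vector [\<i> * sfun (\<i> * z * l) / z, dfun (\<i> * z * l) / z^2,
             \<i> * \<alpha> / z^2 * (LINT t:{0..l}|lborel. dfun (\<i> * z * (l - t)) * v t)]]"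

end

theory Submission
  imports Defs "HOL-Complex_Analysis.Complex_Analysis"
begin


abbreviation "\<zeta> \<equiv> zeta2"

lemma zeta2_sq: "zeta2^2 = zeta3"
  by (simp add: zeta2_def zeta3_def power2_eq_square complex_eq_iff field_simps)
lemma zeta_rel: "\<zeta>^2 + \<zeta> + 1 = 0"
  by (simp add: zeta2_def power2_eq_square complex_eq_iff field_simps)
lemma zeta_cube: "\<zeta>^3 = 1"
proof -
  have "\<zeta>^3 - 1 = (\<zeta> - 1) * (\<zeta>^2 + \<zeta> + 1)" by algebra
  thus ?thesis using zeta_rel by simp
qed
lemma zeta_ne0: "\<zeta> \<noteq> 0" using zeta_cube by auto
lemma zeta_ne1: "\<zeta> \<noteq> 1" using zeta_rel by auto
lemma cnj_zeta: "cnj \<zeta> = \<zeta>^2"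
  by (simp add: zeta2_def power2_eq_square complex_eq_iff field_simps)

lemma cfun_alt: "cfun w = (exp w + exp (w*\<zeta>) + exp (w*\<zeta>^2))/3"
  by (simp add: cfun_def zeta1_def zeta2_sq)
lemma zeta_inv: "inverse \<zeta> = \<zeta>^2"
proof (rule inverse_unique)
  have "\<zeta> * \<zeta>^2 = \<zeta>^3" by (simp add: power2_eq_square power3_eq_cube)
  thus "\<zeta> * \<zeta>^2 = 1" by (simp add: zeta_cube)
qed
lemma zeta_inv2: "inverse (\<zeta>^2) = \<zeta>"
proof (rule inverse_unique)
  have "\<zeta>^2 * \<zeta> = \<zeta>^3" by (simp add: power2_eq_square power3_eq_cube)
  thus "\<zeta>^2 * \<zeta> = 1" by (simp add: zeta_cube)
qed
lemma zeta4: "\<zeta>^4 = \<zeta>"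
proof -
  have "\<zeta>^4 = \<zeta>^3 * \<zeta>" by (simp only: power_Suc2[symmetric]) simp
  thus ?thesis by (simp add: zeta_cube)
qed
lemma zeta_inv4: "inverse ((\<zeta>^2)^2) = \<zeta>^2"
proof -
  have "(\<zeta>^2)^2 = \<zeta>^4" by algebra
  hence "(\<zeta>^2)^2 = \<zeta>" by (simp only: zeta4)
  thus ?thesis by (simp only: zeta_inv)
qed

lemma sfun_alt: "sfun w = (exp w + \<zeta>^2 * exp (w*\<zeta>) + \<zeta> * exp (w*\<zeta>^2))/3"
  by (simp only: sfun_def zeta1_def zeta2_sq[symmetric] zeta_inv zeta_inv2 inverse_1 mult_1_left mult_1_right)
lemma dfun_alt: "dfun w = (exp w + \<zeta> * exp (w*\<zeta>) + \<zeta>^2 * exp (w*\<zeta>^2))/3"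
proof -
  have e3: "inverse (zeta3^2) = \<zeta>^2" unfolding zeta2_sq[symmetric] by (rule zeta_inv4)
  have e1: "inverse (zeta1^2) = 1" by (simp add: zeta1_def)
  show ?thesis unfolding dfun_def e1 e3 zeta_inv2 unfolding zeta1_def zeta2_sq[symmetric] by simp
qed


lemma exp_sum3: "exp ((u+u')*z) = exp (u*z) * exp (u'*(z::complex))"
  by (simp add: distrib_right exp_add del: mult_exp_exp)



lemma g_cadd: "z^2 + z + 1 = (0::complex) \<Longrightarrow> 3*t = 1 \<Longrightarrow>
  (a*b + a2*b2 + a3*b3)*t = (a+a2+a3)*t*((b+b2+b3)*t) + (a+z*a2+z^2*a3)*t*((b+z^2*b2+z*b3)*t) + (a+z^2*a2+z*a3)*t*((b+z*b2+z^2*b3)*t)"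
  by algebra
lemma g_dadd: "z^2 + z + 1 = (0::complex) \<Longrightarrow> 3*t = 1 \<Longrightarrow>
  (a*b + z*(a2*b2) + z^2*(a3*b3))*t = (a+a2+a3)*t*((b+z*b2+z^2*b3)*t) + (a+z*a2+z^2*a3)*t*((b+b2+b3)*t) + (a+z^2*a2+z*a3)*t*((b+z^2*b2+z*b3)*t)"
  by algebra
lemma g_sadd: "z^2 + z + 1 = (0::complex) \<Longrightarrow> 3*t = 1 \<Longrightarrow>
  (a*b + z^2*(a2*b2) + z*(a3*b3))*t = (a+a2+a3)*t*((b+z^2*b2+z*b3)*t) + (a+z^2*a2+z*a3)*t*((b+b2+b3)*t) + (a+z*a2+z^2*a3)*t*((b+z*b2+z^2*b3)*t)"
  by algebra
lemma g_cneg: "z^2 + z + 1 = (0::complex) \<Longrightarrow> 3*t = 1 \<Longrightarrow>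
  (a2*a3 + a*a3 + a*a2)*t = ((a+a2+a3)*t)^2 - (a+z^2*a2+z*a3)*t*((a+z*a2+z^2*a3)*t)"
  by algebra
lemma g_dneg: "z^2 + z + 1 = (0::complex) \<Longrightarrow> 3*t = 1 \<Longrightarrow>
  (a2*a3 + z*(a*a3) + z^2*(a*a2))*t = ((a+z^2*a2+z*a3)*t)^2 - (a+a2+a3)*t*((a+z*a2+z^2*a3)*t)"
  by algebra
lemma g_sneg: "z^2 + z + 1 = (0::complex) \<Longrightarrow> 3*t = 1 \<Longrightarrow>
  (a2*a3 + z^2*(a*a3) + z*(a*a2))*t = ((a+z*a2+z^2*a3)*t)^2 - (a+a2+a3)*t*((a+z^2*a2+z*a3)*t)"
  by algebra
lemma g_sscale: "z^2 + z + 1 = (0::complex) \<Longrightarrow>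
  (a2 + z^2*a3 + z*a)*t = z*((a + z^2*a2 + z*a3)*t)"
  by algebra
lemma g_dscale: "z^2 + z + 1 = (0::complex) \<Longrightarrow>
  (a2 + z*a3 + z^2*a)*t = z^2*((a + z*a2 + z^2*a3)*t)"
  by algebra

lemma three_inv: "3 * inverse (3::complex) = 1" by simp

lemma cfun_add: "cfun (u + u') = cfun u * cfun u' + dfun u * sfun u' + sfun u * dfun u'"
  unfolding cfun_alt sfun_alt dfun_alt exp_sum3 exp_add divide_inverse
  by (rule g_cadd[OF zeta_rel three_inv])
lemma dfun_add: "dfun (u + u') = cfun u * dfun u' + dfun u * cfun u' + sfun u * sfun u'"
  unfolding cfun_alt sfun_alt dfun_alt exp_sum3 exp_add divide_inverse
  by (rule g_dadd[OF zeta_rel three_inv])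
lemma sfun_add: "sfun (u + u') = cfun u * sfun u' + sfun u * cfun u' + dfun u * dfun u'"
  unfolding cfun_alt sfun_alt dfun_alt exp_sum3 exp_add divide_inverse
  by (rule g_sadd[OF zeta_rel three_inv])

lemma exp_neg3:
  "exp (-w) = exp (w*\<zeta>) * exp (w*\<zeta>^2)"
  "exp ((-w)*\<zeta>) = exp w * exp (w*\<zeta>^2)"
  "exp ((-w)*\<zeta>^2) = exp w * exp (w*\<zeta>)"
proof -
  have "-w = w*\<zeta> + w*\<zeta>^2" using zeta_rel by algebra
  thus "exp (-w) = exp (w*\<zeta>) * exp (w*\<zeta>^2)" by (simp add: exp_add del: mult_exp_exp)
  have "(-w)*\<zeta> = w + w*\<zeta>^2" using zeta_rel by algebra
  thus "exp ((-w)*\<zeta>) = exp w * exp (w*\<zeta>^2)" by (simp add: exp_add del: mult_exp_exp)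
  have "(-w)*\<zeta>^2 = w + w*\<zeta>" using zeta_rel by algebra
  thus "exp ((-w)*\<zeta>^2) = exp w * exp (w*\<zeta>)" by (simp add: exp_add del: mult_exp_exp)
qed

lemma cfun_neg: "cfun (-w) = cfun w ^ 2 - sfun w * dfun w"
  unfolding cfun_alt sfun_alt dfun_alt exp_neg3 divide_inverse by (rule g_cneg[OF zeta_rel three_inv])
lemma dfun_neg: "dfun (-w) = sfun w ^ 2 - cfun w * dfun w"
  unfolding cfun_alt sfun_alt dfun_alt exp_neg3 divide_inverse by (rule g_dneg[OF zeta_rel three_inv])
lemma sfun_neg: "sfun (-w) = dfun w ^ 2 - cfun w * sfun w"
  unfolding cfun_alt sfun_alt dfun_alt exp_neg3 divide_inverse by (rule g_sneg[OF zeta_rel three_inv])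

lemma cnj_zeta2: "cnj (\<zeta>^2) = \<zeta>"
  by (simp add: cnj_zeta zeta4 flip: power_mult)

lemma exp_cnj3:
  "cnj (exp (cnj w)) = exp w"
  "cnj (exp (cnj w * \<zeta>)) = exp (w*\<zeta>^2)"
  "cnj (exp (cnj w * \<zeta>^2)) = exp (w*\<zeta>)"
  by (simp_all only: exp_cnj complex_cnj_mult complex_cnj_cnj cnj_zeta cnj_zeta2)

lemma cfun_cnj: "cnj (cfun (cnj w)) = cfun w"
  unfolding cfun_alt by (simp only: complex_cnj_divide complex_cnj_add exp_cnj3 complex_cnj_numeral) (simp add: algebra_simps)
lemma sfun_cnj: "cnj (sfun (cnj w)) = sfun w"
  unfolding sfun_alt by (simp only: complex_cnj_divide complex_cnj_add complex_cnj_mult exp_cnj3 cnj_zeta cnj_zeta2 complex_cnj_numeral add.assoc) (simp add: algebra_simps)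
lemma dfun_cnj: "cnj (dfun (cnj w)) = dfun w"
  unfolding dfun_alt by (simp only: complex_cnj_divide complex_cnj_add complex_cnj_mult exp_cnj3 cnj_zeta cnj_zeta2 complex_cnj_numeral add.assoc) (simp add: algebra_simps)

lemma exp_scale3:
  "exp ((\<zeta>*w)) = exp (w*\<zeta>)"
  "exp ((\<zeta>*w)*\<zeta>) = exp (w*\<zeta>^2)"
  "exp ((\<zeta>*w)*\<zeta>^2) = exp w"
proof -
  show "exp ((\<zeta>*w)) = exp (w*\<zeta>)" by (simp add: mult.commute)
  have "(\<zeta>*w)*\<zeta> = w*\<zeta>^2" by (simp add: power2_eq_square mult_ac)
  thus "exp ((\<zeta>*w)*\<zeta>) = exp (w*\<zeta>^2)" by (rule arg_cong)
  have "(\<zeta>*w)*\<zeta>^2 = w*\<zeta>^3" by (simp add: power2_eq_square power3_eq_cube mult_ac)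
  hence "(\<zeta>*w)*\<zeta>^2 = w" by (simp only: zeta_cube mult_1_right)
  thus "exp ((\<zeta>*w)*\<zeta>^2) = exp w" by (rule arg_cong)
qed

lemma cfun_scale: "cfun (\<zeta>*w) = cfun w"
  unfolding cfun_alt exp_scale3 by (simp add: algebra_simps)
lemma sfun_scale: "sfun (\<zeta>*w) = \<zeta> * sfun w"
  unfolding sfun_alt exp_scale3 divide_inverse by (rule g_sscale[OF zeta_rel])
lemma dfun_scale: "dfun (\<zeta>*w) = \<zeta>^2 * dfun w"
  unfolding dfun_alt exp_scale3 divide_inverse by (rule g_dscale[OF zeta_rel])

lemma fun0: "cfun 0 = 1" "sfun 0 = 0" "dfun 0 = 0"
proof -
  have "1 + \<zeta> + \<zeta>^2 = 0" using zeta_rel by (simp add: algebra_simps)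
  thus "cfun 0 = 1" "sfun 0 = 0" "dfun 0 = 0"
    unfolding cfun_alt sfun_alt dfun_alt by (simp_all add: algebra_simps)
qed


lemma int_bdd:
  fixes g k :: "'a \<Rightarrow> complex"
  assumes g: "integrable M g" and k: "k \<in> borel_measurable M"
    and bd: "\<And>w. w \<in> space M \<Longrightarrow> g w \<noteq> 0 \<Longrightarrow> norm (k w) \<le> B"
  shows "integrable M (\<lambda>w. g w * k w)"
proof (rule Bochner_Integration.integrable_bound[where f="\<lambda>w. B * norm (g w)"])
  show "integrable M (\<lambda>w. B * norm (g w))" using g by auto
  show "(\<lambda>w. g w * k w) \<in> borel_measurable M" using g k by (auto intro: borel_measurable_integrable)
  show "AE w in M. norm (g w * k w) \<le> norm (B * norm (g w))"
  proof (rule AE_I2)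
    fix w assume w: "w \<in> space M"
    show "norm (g w * k w) \<le> norm (B * norm (g w))"
    proof (cases "g w = 0")
      case False
      have "norm (g w * k w) = norm (g w) * norm (k w)" by (simp add: norm_mult)
      also have "\<dots> \<le> norm (g w) * B" using bd[OF w False] by (simp add: mult_left_mono)
      also have "\<dots> \<le> norm (g w) * \<bar>B\<bar>" by (rule mult_left_mono) auto
      also have "\<dots> = norm (B * norm (g w))" by (simp add: abs_mult mult.commute)
      finally show ?thesis .
    qed simp
  qed
qed

lemma int_norm_bdd:
  fixes g k :: "'a \<Rightarrow> complex"
  assumes g: "integrable M g" and k: "k \<in> borel_measurable M"
    and bd: "\<And>w. w \<in> space M \<Longrightarrow> g w \<noteq> 0 \<Longrightarrow> norm (k w) \<le> B"
  shows "norm (\<integral>w. g w * k w \<partial>M) \<le> B * (\<integral>w. norm (g w) \<partial>M)"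
proof -
  have "norm (\<integral>w. g w * k w \<partial>M) \<le> (\<integral>w. norm (g w * k w) \<partial>M)" by (rule integral_norm_bound)
  also have "\<dots> \<le> (\<integral>w. B * norm (g w) \<partial>M)"
  proof (rule integral_mono)
    show "integrable M (\<lambda>w. norm (g w * k w))" using int_bdd[OF g k bd] by auto
    show "integrable M (\<lambda>w. B * norm (g w))" using g by auto
    fix w assume w: "w \<in> space M"
    show "norm (g w * k w) \<le> B * norm (g w)"
    proof (cases "g w = 0")
      case False
      have "norm (g w * k w) = norm (g w) * norm (k w)" by (simp add: norm_mult)
      also have "\<dots> \<le> norm (g w) * B" using bd[OF w False] by (simp add: mult_left_mono)
      finally show ?thesis by (simp add: mult.commute)
    qed simp
  qed
  also have "\<dots> = B * (\<integral>w. norm (g w) \<partial>M)" by simp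
  finally show ?thesis .
qed

lemma exp_taylor1: "norm (exp u - 1 - u) \<le> exp (norm u) * norm (u::complex) ^ 2"
  using Taylor_exp_field[of u 1] by (simp add: power2_eq_square diff_diff_eq)

lemma hol_exp_int:
  fixes g \<psi> :: "'a \<Rightarrow> complex"
  assumes g: "integrable M g" and \<psi>: "\<psi> \<in> borel_measurable M"
    and bd: "\<And>w. w \<in> space M \<Longrightarrow> g w \<noteq> 0 \<Longrightarrow> norm (\<psi> w) \<le> R"
  shows "((\<lambda>z. \<integral>w. g w * exp (z * \<psi> w) \<partial>M) has_field_derivative
            (\<integral>w. g w * (\<psi> w * exp (z0 * \<psi> w)) \<partial>M)) (at z0)"
proof -
  define I where "I z = (\<integral>w. g w * exp (z * \<psi> w) \<partial>M)" for z
  define J where "J = (\<integral>w. g w * (\<psi> w * exp (z0 * \<psi> w)) \<partial>M)"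
  have R0: "0 \<le> R" if "w \<in> space M" "g w \<noteq> 0" for w using bd[OF that] norm_ge_zero order_trans by blast
  have mexp: "(\<lambda>w. exp (z * \<psi> w)) \<in> borel_measurable M" for z using \<psi> by measurable
  have intI: "integrable M (\<lambda>w. g w * exp (z * \<psi> w))" for z
  proof (rule int_bdd[OF g mexp])
    fix w assume "w \<in> space M" "g w \<noteq> 0"
    hence "norm (z * \<psi> w) \<le> norm z * R" using bd by (simp add: norm_mult mult_left_mono)
    hence "exp (norm (z * \<psi> w)) \<le> exp (norm z * R)" by simp
    thus "norm (exp (z * \<psi> w)) \<le> exp (norm z * R)" using norm_exp order_trans by blast
  qed
  have intJ: "integrable M (\<lambda>w. g w * (\<psi> w * exp (z0 * \<psi> w)))"
  proof (rule int_bdd[OF g])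
    show "(\<lambda>w. \<psi> w * exp (z0 * \<psi> w)) \<in> borel_measurable M" using \<psi> by measurable
    fix w assume w: "w \<in> space M" "g w \<noteq> 0"
    hence n1: "norm (z0 * \<psi> w) \<le> norm z0 * R" using bd by (simp add: norm_mult mult_left_mono)
    have "norm (\<psi> w * exp (z0 * \<psi> w)) = norm (\<psi> w) * norm (exp (z0 * \<psi> w))" by (simp add: norm_mult)
    also have "\<dots> \<le> R * exp (norm z0 * R)"
    proof (rule mult_mono)
      show "norm (\<psi> w) \<le> R" using bd w by auto
      have "norm (exp (z0 * \<psi> w)) \<le> exp (norm (z0 * \<psi> w))" by (rule norm_exp)
      also have "\<dots> \<le> exp (norm z0 * R)" using n1 by simp
      finally show "norm (exp (z0 * \<psi> w)) \<le> exp (norm z0 * R)" .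
    qed (use R0 w in auto)
    finally show "norm (\<psi> w * exp (z0 * \<psi> w)) \<le> R * exp (norm z0 * R)" .
  qed
  define C where "C = (\<integral>w. norm (g w) \<partial>M) * exp ((norm z0 + 1) * R) * R^2"
  have est: "norm ((I z - I z0) / (z - z0) - J) \<le> C * norm (z - z0)"
    if z: "z \<noteq> z0" "norm (z - z0) < 1" for z
  proof -
    define h where "h = z - z0"
    have h0: "h \<noteq> 0" using z by (simp add: h_def)
    have eq: "I z - I z0 - h * J = (\<integral>w. g w * (exp (z0 * \<psi> w) * (exp (h * \<psi> w) - 1 - h * \<psi> w)) \<partial>M)"
    proof -
      have "I z - I z0 - h * J = (\<integral>w. g w * exp (z * \<psi> w) - g w * exp (z0 * \<psi> w) - h * (g w * (\<psi> w * exp (z0 * \<psi> w))) \<partial>M)"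
        unfolding I_def J_def using intI intJ by simp
      also have "\<dots> = (\<integral>w. g w * (exp (z0 * \<psi> w) * (exp (h * \<psi> w) - 1 - h * \<psi> w)) \<partial>M)"
      proof (rule Bochner_Integration.integral_cong[OF refl])
        fix w
        have "exp (z * \<psi> w) = exp (z0 * \<psi> w) * exp (h * \<psi> w)"
          by (simp add: h_def algebra_simps flip: exp_add)
        thus "g w * exp (z * \<psi> w) - g w * exp (z0 * \<psi> w) - h * (g w * (\<psi> w * exp (z0 * \<psi> w))) =
              g w * (exp (z0 * \<psi> w) * (exp (h * \<psi> w) - 1 - h * \<psi> w))"
          by (simp add: algebra_simps)
      qed
      finally show ?thesis .
    qed
    have "norm (I z - I z0 - h * J) \<le> (exp ((norm z0 + 1) * R) * (norm h ^ 2 * R^2)) * (\<integral>w. norm (g w) \<partial>M)"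
      unfolding eq
    proof (rule int_norm_bdd[OF g])
      show "(\<lambda>w. exp (z0 * \<psi> w) * (exp (h * \<psi> w) - 1 - h * \<psi> w)) \<in> borel_measurable M" using \<psi> by measurable
      fix w assume w: "w \<in> space M" "g w \<noteq> 0"
      have nR: "norm (\<psi> w) \<le> R" using bd w by auto
      have n1: "norm (z0 * \<psi> w) \<le> norm z0 * R" using nR by (simp add: norm_mult mult_left_mono)
      have n2: "norm (h * \<psi> w) \<le> norm h * R" using nR by (simp add: norm_mult mult_left_mono)
      have hl: "norm h \<le> 1" using z by (simp add: h_def)
      have e1: "norm (exp (z0 * \<psi> w)) \<le> exp (norm z0 * R)"
        using norm_exp[of "z0 * \<psi> w"] n1 by (meson exp_le_cancel_iff order_trans)
      have "norm (exp (h * \<psi> w) - 1 - h * \<psi> w) \<le> exp (norm (h * \<psi> w)) * norm (h * \<psi> w) ^ 2"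
        by (rule exp_taylor1)
      also have "\<dots> \<le> exp R * (norm h * R) ^ 2"
      proof (rule mult_mono)
        have "norm h * R \<le> R" using hl R0[OF w] by (simp add: mult_left_le_one_le)
        thus "exp (norm (h * \<psi> w)) \<le> exp R" using n2 by simp
        show "norm (h * \<psi> w) ^ 2 \<le> (norm h * R) ^ 2" using n2 by (simp add: power_mono)
      qed auto
      finally have e2: "norm (exp (h * \<psi> w) - 1 - h * \<psi> w) \<le> exp R * (norm h * R) ^ 2" .
      have "norm (exp (z0 * \<psi> w) * (exp (h * \<psi> w) - 1 - h * \<psi> w)) \<le> exp (norm z0 * R) * (exp R * (norm h * R) ^ 2)"
        unfolding norm_mult by (rule mult_mono[OF e1 e2]) auto
      also have "\<dots> = exp ((norm z0 + 1) * R) * (norm h ^ 2 * R^2)"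
        by (simp add: distrib_right exp_add power_mult_distrib)
      finally show "norm (exp (z0 * \<psi> w) * (exp (h * \<psi> w) - 1 - h * \<psi> w)) \<le> exp ((norm z0 + 1) * R) * (norm h ^ 2 * R^2)" .
    qed
    also have "\<dots> = C * norm h * norm h" by (simp add: C_def power2_eq_square mult_ac)
    finally have a: "norm (I z - I z0 - h * J) \<le> C * norm h * norm h" .
    have "(I z - I z0) / (z - z0) - J = (I z - I z0 - h * J) / h"
      using h0 by (simp add: h_def field_simps)
    hence "norm ((I z - I z0) / (z - z0) - J) = norm (I z - I z0 - h * J) / norm h"
      by (simp add: norm_divide)
    also have "\<dots> \<le> C * norm h"
      using a h0 by (simp add: divide_le_eq)
    finally show ?thesis by (simp add: h_def)
  qed
  have "((\<lambda>z. (I z - I z0) / (z - z0) - J) \<longlongrightarrow> 0) (at z0)"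
  proof (rule Lim_null_comparison)
    show "\<forall>\<^sub>F z in at z0. norm ((I z - I z0) / (z - z0) - J) \<le> C * norm (z - z0)"
      unfolding eventually_at
      by (rule exI[of _ 1]) (auto simp: dist_norm intro!: est)
    show "((\<lambda>z. C * norm (z - z0)) \<longlongrightarrow> 0) (at z0)"
      by (auto intro!: tendsto_eq_intros)
  qed
  hence "((\<lambda>z. (I z - I z0) / (z - z0)) \<longlongrightarrow> J) (at z0)"
    by (rule Lim_null[THEN iffD2])
  thus ?thesis unfolding has_field_derivative_iff I_def J_def .
qed


lemma norm_zeta: "norm \<zeta> = 1"
  by (simp add: zeta2_def cmod_def power2_eq_square)

lemma norm_exp_le: "norm (exp (u::complex)) \<le> exp (norm u)" by (rule norm_exp)

lemma norm_exp_zeta: "norm (exp (u*\<zeta>)) \<le> exp (norm u)" "norm (exp (u*\<zeta>^2)) \<le> exp (norm u)"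
  using norm_exp[of "u*\<zeta>"] norm_exp[of "u*\<zeta>^2"] by (simp_all add: norm_mult norm_power norm_zeta)

lemma norm_dfun: "norm (dfun u) \<le> exp (norm u)"
proof -
  have "norm (dfun u) \<le> (norm (exp u) + norm (\<zeta> * exp (u*\<zeta>)) + norm (\<zeta>^2 * exp (u*\<zeta>^2))) / 3"
    unfolding dfun_alt norm_divide by (simp add: divide_right_mono norm_triangle_le)
  also have "\<dots> \<le> (exp (norm u) + exp (norm u) + exp (norm u)) / 3"
    using norm_exp_le[of u] norm_exp_zeta[of u] by (intro divide_right_mono add_mono) (simp_all add: norm_mult norm_power norm_zeta)
  finally show ?thesis by simp
qed
lemma norm_cfun: "norm (cfun u) \<le> exp (norm u)"
proof -
  have "norm (cfun u) \<le> (norm (exp u) + norm (exp (u*\<zeta>)) + norm (exp (u*\<zeta>^2))) / 3"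
    unfolding cfun_alt norm_divide by (simp add: divide_right_mono norm_triangle_le)
  also have "\<dots> \<le> (exp (norm u) + exp (norm u) + exp (norm u)) / 3"
    using norm_exp_le[of u] norm_exp_zeta[of u] by (intro divide_right_mono add_mono) (simp_all add: norm_mult norm_power norm_zeta)
  finally show ?thesis by simp
qed
lemma norm_sfun: "norm (sfun u) \<le> exp (norm u)"
proof -
  have "norm (sfun u) \<le> (norm (exp u) + norm (\<zeta>^2 * exp (u*\<zeta>)) + norm (\<zeta> * exp (u*\<zeta>^2))) / 3"
    unfolding sfun_alt norm_divide by (simp add: divide_right_mono norm_triangle_le)
  also have "\<dots> \<le> (exp (norm u) + exp (norm u) + exp (norm u)) / 3"
    using norm_exp_le[of u] norm_exp_zeta[of u] by (intro divide_right_mono add_mono) (simp_all add: norm_mult norm_power norm_zeta)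
  finally show ?thesis by simp
qed

lemma cont_dfun: "continuous_on UNIV dfun" unfolding dfun_def by (intro continuous_intros) auto
lemma cont_cfun: "continuous_on UNIV cfun" unfolding cfun_def by (intro continuous_intros) auto
lemma cont_sfun: "continuous_on UNIV sfun" unfolding sfun_def by (intro continuous_intros) auto

lemma meas_dfun[measurable]: "dfun \<in> borel_measurable borel"
  using cont_dfun by (rule borel_measurable_continuous_onI)
lemma meas_cfun[measurable]: "cfun \<in> borel_measurable borel"
  using cont_cfun by (rule borel_measurable_continuous_onI)
lemma meas_sfun[measurable]: "sfun \<in> borel_measurable borel"
  using cont_sfun by (rule borel_measurable_continuous_onI)

lemma hol_dfun: "dfun holomorphic_on UNIV" unfolding dfun_def by (intro holomorphic_intros) auto
lemma hol_dfun_comp[holomorphic_intros]: "f holomorphic_on A \<Longrightarrow> (\<lambda>z. dfun (f z)) holomorphic_on A"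
  using holomorphic_on_compose[of f A dfun] hol_dfun holomorphic_on_subset by (auto simp: comp_def)

definition KD :: "'a measure \<Rightarrow> ('a \<Rightarrow> complex) \<Rightarrow> ('a \<Rightarrow> complex) \<Rightarrow> complex \<Rightarrow> complex" where
  "KD M g \<psi> z = (\<integral>w. g w * dfun (z * \<psi> w) \<partial>M)"

locale kd =
  fixes M :: "'a measure" and g \<psi> :: "'a \<Rightarrow> complex" and R :: real
  assumes g: "integrable M g" and \<psi>[measurable]: "\<psi> \<in> borel_measurable M"
    and bd: "\<And>w. w \<in> space M \<Longrightarrow> g w \<noteq> 0 \<Longrightarrow> norm (\<psi> w) \<le> R"
begin

lemma R0: "w \<in> space M \<Longrightarrow> g w \<noteq> 0 \<Longrightarrow> 0 \<le> R"
  using bd norm_ge_zero order_trans by blast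

lemma int_exp: "integrable M (\<lambda>w. g w * exp (z * (\<psi> w * c)))" if "norm c = 1"
proof (rule int_bdd[OF g])
  show "(\<lambda>w. exp (z * (\<psi> w * c))) \<in> borel_measurable M" by measurable
  fix w assume "w \<in> space M" "g w \<noteq> 0"
  hence "norm (z * (\<psi> w * c)) \<le> norm z * R" using bd that by (simp add: norm_mult mult_left_mono)
  hence "exp (norm (z * (\<psi> w * c))) \<le> exp (norm z * R)" by simp
  thus "norm (exp (z * (\<psi> w * c))) \<le> exp (norm z * R)" using norm_exp order_trans by blast
qed

lemma int_k: "integrable M (\<lambda>w. g w * k (z * \<psi> w))"
  if "k \<in> borel_measurable borel" "\<And>u. norm (k u) \<le> exp (norm u)"
proof (rule int_bdd[OF g])
  show "(\<lambda>w. k (z * \<psi> w)) \<in> borel_measurable M" using that(1) by measurable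
  fix w assume "w \<in> space M" "g w \<noteq> 0"
  hence "norm (z * \<psi> w) \<le> norm z * R" using bd by (simp add: norm_mult mult_left_mono)
  hence "exp (norm (z * \<psi> w)) \<le> exp (norm z * R)" by simp
  thus "norm (k (z * \<psi> w)) \<le> exp (norm z * R)" using that(2) order_trans by blast
qed

lemma int_d: "integrable M (\<lambda>w. g w * dfun (z * \<psi> w))"
  by (rule int_k) (auto simp: norm_dfun)
lemma int_c: "integrable M (\<lambda>w. g w * cfun (z * \<psi> w))"
  by (rule int_k) (auto simp: norm_cfun)
lemma int_s: "integrable M (\<lambda>w. g w * sfun (z * \<psi> w))"
  by (rule int_k) (auto simp: norm_sfun)

lemma KD_bound: "norm (KD M g \<psi> z) \<le> exp (norm z * R) * (\<integral>w. norm (g w) \<partial>M)"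
  unfolding KD_def
proof (rule int_norm_bdd[OF g])
  show "(\<lambda>w. dfun (z * \<psi> w)) \<in> borel_measurable M" by measurable
  fix w assume "w \<in> space M" "g w \<noteq> 0"
  hence "norm (z * \<psi> w) \<le> norm z * R" using bd by (simp add: norm_mult mult_left_mono)
  hence "exp (norm (z * \<psi> w)) \<le> exp (norm z * R)" by simp
  thus "norm (dfun (z * \<psi> w)) \<le> exp (norm z * R)" using norm_dfun order_trans by blast
qed

lemma KD_0: "KD M g \<psi> 0 = 0"
  unfolding KD_def by (simp add: fun0)

lemma KD_scale: "KD M g \<psi> (\<zeta> * z) = \<zeta>^2 * KD M g \<psi> z"
proof -
  have "KD M g \<psi> (\<zeta> * z) = (\<integral>w. \<zeta>^2 * (g w * dfun (z * \<psi> w)) \<partial>M)"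
    unfolding KD_def by (rule Bochner_Integration.integral_cong) (auto simp: mult.assoc dfun_scale mult_ac)
  thus ?thesis unfolding KD_def by simp
qed

lemma KD_hol: "KD M g \<psi> holomorphic_on UNIV"
proof -
  define I where "I c z = (\<integral>w. g w * exp (z * (\<psi> w * c)) \<partial>M)" for c z
  have hI: "I c holomorphic_on UNIV" if c: "norm c = 1" for c
  proof -
    have b: "\<And>w. w \<in> space M \<Longrightarrow> g w \<noteq> 0 \<Longrightarrow> norm (\<psi> w * c) \<le> R"
      using bd c by (simp add: norm_mult)
    have m: "(\<lambda>w. \<psi> w * c) \<in> borel_measurable M" by measurable
    show ?thesis unfolding holomorphic_on_def field_differentiable_def I_def
      using hol_exp_int[OF g m b] by (auto simp: has_field_derivative_at_within)
  qed
  have eq: "KD M g \<psi> z = (I 1 z + \<zeta> * I \<zeta> z + \<zeta>^2 * I (\<zeta>^2) z) / 3" for z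
  proof -
    have i1: "integrable M (\<lambda>w. g w * exp (z * (\<psi> w * 1)))" by (rule int_exp) simp
    have i2: "integrable M (\<lambda>w. g w * exp (z * (\<psi> w * \<zeta>)))" by (rule int_exp) (simp add: norm_zeta)
    have i3: "integrable M (\<lambda>w. g w * exp (z * (\<psi> w * \<zeta>^2)))" by (rule int_exp) (simp add: norm_zeta norm_power)
    have "KD M g \<psi> z = (\<integral>w. (g w * exp (z * (\<psi> w * 1)) + \<zeta> * (g w * exp (z * (\<psi> w * \<zeta>))) + \<zeta>^2 * (g w * exp (z * (\<psi> w * \<zeta>^2)))) / 3 \<partial>M)"
      unfolding KD_def dfun_alt by (rule Bochner_Integration.integral_cong) (auto simp: algebra_simps)
    also have "\<dots> = (I 1 z + \<zeta> * I \<zeta> z + \<zeta>^2 * I (\<zeta>^2) z) / 3"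
      unfolding I_def using i1 i2 i3 by simp
    finally show ?thesis .
  qed
  have "(\<lambda>z. (I 1 z + \<zeta> * I \<zeta> z + \<zeta>^2 * I (\<zeta>^2) z) / 3) holomorphic_on UNIV"
    using hI[of 1] hI[of \<zeta>] hI[of "\<zeta>^2"] by (intro holomorphic_intros) (auto simp: norm_zeta norm_power)
  thus ?thesis using eq by (simp add: fun_eq_iff[symmetric] eq[abs_def])
qed

end

lemma KD_cnj: "cnj (KD M g \<psi> (cnj z)) = KD M (\<lambda>w. cnj (g w)) (\<lambda>w. cnj (\<psi> w)) z"
proof -
  have "cnj (KD M g \<psi> (cnj z)) = (\<integral>w. cnj (g w * dfun (cnj z * \<psi> w)) \<partial>M)"
    unfolding KD_def by (simp only: Bochner_Integration.integral_cnj)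
  also have "\<dots> = KD M (\<lambda>w. cnj (g w)) (\<lambda>w. cnj (\<psi> w)) z"
    unfolding KD_def
  proof (rule Bochner_Integration.integral_cong[OF refl])
    fix w
    have "cnj (dfun (cnj z * \<psi> w)) = dfun (z * cnj (\<psi> w))"
      using dfun_cnj[of "z * cnj (\<psi> w)"] by simp
    thus "cnj (g w * dfun (cnj z * \<psi> w)) = cnj (g w) * dfun (z * cnj (\<psi> w))" by simp
  qed
  finally show ?thesis .
qed

lemma KD_neg: "KD M g \<psi> (- z) = KD M g (\<lambda>w. - \<psi> w) z"
  unfolding KD_def by simp


lemma pair_int:
  fixes a b :: "real \<Rightarrow> complex" and k :: "real \<times> real \<Rightarrow> complex"
  assumes a: "integrable lborel a" and b: "integrable lborel b"
    and k: "k \<in> borel_measurable (lborel \<Otimes>\<^sub>M lborel)" and kb: "\<And>p. norm (k p) \<le> 1"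
  shows "integrable (lborel \<Otimes>\<^sub>M lborel) (\<lambda>p. a (fst p) * b (snd p) * k p)"
proof -
  have am[measurable]: "a \<in> borel_measurable lborel" using a by (rule borel_measurable_integrable)
  have bm[measurable]: "b \<in> borel_measurable lborel" using b by (rule borel_measurable_integrable)
  have f: "integrable (lborel \<Otimes>\<^sub>M lborel) (\<lambda>p. norm (a (fst p)) * norm (b (snd p)))"
  proof (rule lborel_pair.Fubini_integrable)
    show "(\<lambda>p. norm (a (fst p)) * norm (b (snd p))) \<in> borel_measurable (lborel \<Otimes>\<^sub>M lborel)" by measurable
    have "integrable lborel (\<lambda>x. norm (a x) * (\<integral>y. norm (b y) \<partial>lborel))" using a by auto
    moreover have "(\<integral>y. norm (norm (a (fst (x, y))) * norm (b (snd (x, y)))) \<partial>lborel) = norm (a x) * (\<integral>y. norm (b y) \<partial>lborel)" for x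
      by (simp add: abs_mult)
    ultimately show "integrable lborel (\<lambda>x. \<integral>y. norm (norm (a (fst (x, y))) * norm (b (snd (x, y)))) \<partial>lborel)" by simp
    show "AE x in lborel. integrable lborel (\<lambda>y. norm (a (fst (x, y))) * norm (b (snd (x, y))))"
      using b by auto
  qed
  show ?thesis
  proof (rule Bochner_Integration.integrable_bound[OF f])
    show "(\<lambda>p. a (fst p) * b (snd p) * k p) \<in> borel_measurable (lborel \<Otimes>\<^sub>M lborel)" using k by measurable
    show "AE p in lborel \<Otimes>\<^sub>M lborel. norm (a (fst p) * b (snd p) * k p) \<le> norm (norm (a (fst p)) * norm (b (snd p)))"
    proof (rule AE_I2)
      fix p
      have "norm (a (fst p) * b (snd p) * k p) = norm (a (fst p)) * norm (b (snd p)) * norm (k p)" by (simp add: norm_mult)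
      also have "\<dots> \<le> norm (a (fst p)) * norm (b (snd p)) * 1" by (rule mult_left_mono[OF kb]) auto
      finally show "norm (a (fst p) * b (snd p) * k p) \<le> norm (norm (a (fst p)) * norm (b (snd p)))" by simp
    qed
  qed
qed

lemma pair_prod:
  fixes a b :: "real \<Rightarrow> complex"
  assumes a: "integrable lborel a" and b: "integrable lborel b"
  shows "(\<integral>p. a (fst p) * b (snd p) \<partial>(lborel \<Otimes>\<^sub>M lborel)) = (\<integral>x. a x \<partial>lborel) * (\<integral>y. b y \<partial>lborel)"
proof -
  have i: "integrable (lborel \<Otimes>\<^sub>M lborel) (\<lambda>p. a (fst p) * b (snd p) * 1)"
    by (rule pair_int[OF a b]) auto
  have "(\<integral>p. a (fst p) * b (snd p) \<partial>(lborel \<Otimes>\<^sub>M lborel)) = (\<integral>x. (\<integral>y. a x * b y \<partial>lborel) \<partial>lborel)"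
    using lborel_pair.integral_fst'[OF i] by simp
  also have "\<dots> = (\<integral>x. a x * (\<integral>y. b y \<partial>lborel) \<partial>lborel)" by simp
  also have "\<dots> = (\<integral>x. a x \<partial>lborel) * (\<integral>y. b y \<partial>lborel)" by simp
  finally show ?thesis .
qed

locale prob =
  fixes l :: real and v :: "real \<Rightarrow> complex"
  assumes l: "0 < l"
    and vmeas: "set_borel_measurable lborel {0..l} v"
    and vsq: "set_integrable lborel {0..l} (\<lambda>x. (norm (v x))^2)"
begin

definition V where "V x = indicator {0..l} x *\<^sub>R v x"

lemma V_meas[measurable]: "V \<in> borel_measurable lborel"
  using vmeas unfolding set_borel_measurable_def V_def[abs_def] .

lemma V_zero: "V x \<noteq> 0 \<Longrightarrow> x \<in> {0..l}"
  unfolding V_def by (auto simp: indicator_def split: if_splits)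

lemma V_int: "integrable lborel V"
proof (rule Bochner_Integration.integrable_bound[where f="\<lambda>x. indicator {0..l} x + indicator {0..l} x *\<^sub>R (norm (v x))^2"])
  show "integrable lborel (\<lambda>x. indicator {0..l} x + indicator {0..l} x *\<^sub>R (norm (v x))^2 :: real)"
  proof (intro Bochner_Integration.integrable_add)
    have "emeasure lborel {0..l} = ennreal (l - 0)" using l by (intro emeasure_lborel_Icc) simp
    hence "emeasure lborel {0..l} < \<infinity>" by simp
    thus "integrable lborel (indicat_real {0..l})" by (intro integrable_real_indicator) auto
    show "integrable lborel (\<lambda>x. indicator {0..l} x *\<^sub>R (norm (v x))^2 :: real)"
      using vsq unfolding set_integrable_def .
  qed
  show "V \<in> borel_measurable lborel" by measurable
  show "AE x in lborel. norm (V x) \<le> norm (indicator {0..l} x + indicator {0..l} x *\<^sub>R (norm (v x))^2 :: real)"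
  proof (rule AE_I2)
    fix x
    have h: "0 \<le> (norm (v x) - 1)^2" by simp
    have "norm (v x) \<le> 1 + (norm (v x))^2"
    proof -
      have "2 * norm (v x) \<le> 1 + norm (v x) * norm (v x)" using h unfolding power2_eq_square by (simp add: algebra_simps)
      thus ?thesis using norm_ge_zero[of "v x"] unfolding power2_eq_square by linarith
    qed
    thus "norm (V x) \<le> norm (indicator {0..l} x + indicator {0..l} x *\<^sub>R (norm (v x))^2 :: real)"
      unfolding V_def by (auto split: split_indicator)
  qed
qed

lemma Vc_int: "integrable lborel (\<lambda>x. cnj (V x))"
  using V_int by simp

lemma set_conv: "(LINT x:{0..l}|lborel. v x * K x) = (\<integral>x. V x * K x \<partial>lborel)"
  unfolding set_lebesgue_integral_def V_def
  by (rule Bochner_Integration.integral_cong) (auto split: split_indicator)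
lemma set_conv': "(LINT x:{0..l}|lborel. K x * v x) = (\<integral>x. V x * K x \<partial>lborel)"
  unfolding set_lebesgue_integral_def V_def
  by (rule Bochner_Integration.integral_cong) (auto split: split_indicator)

lemma kd_V: "kd lborel V (\<lambda>x. c * of_real x) l" if "norm c = 1"
proof
  show "integrable lborel V" by (rule V_int)
  show "(\<lambda>x. c * complex_of_real x) \<in> borel_measurable lborel" by measurable
  fix w assume "w \<in> space lborel" "V w \<noteq> 0"
  hence "w \<in> {0..l}" using V_zero by auto
  thus "norm (c * complex_of_real w) \<le> l" using that by (simp add: norm_mult)
qed

end


context prob begin

definition Q :: "(complex \<Rightarrow> complex) \<Rightarrow> complex \<Rightarrow> complex" where
  "Q f z = (\<integral>x. V x * f (z * (- \<i> * of_real x)) \<partial>lborel)"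
definition P :: "(complex \<Rightarrow> complex) \<Rightarrow> complex \<Rightarrow> complex" where
  "P f z = (\<integral>x. cnj (V x) * f (z * (\<i> * of_real x)) \<partial>lborel)"

lemma kd_Vc: "kd lborel (\<lambda>x. cnj (V x)) (\<lambda>x. c * of_real x) l" if "norm c = 1"
proof
  show "integrable lborel (\<lambda>x. cnj (V x))" by (rule Vc_int)
  show "(\<lambda>x. c * complex_of_real x) \<in> borel_measurable lborel" by measurable
  fix w assume "w \<in> space lborel" "cnj (V w) \<noteq> 0"
  hence "w \<in> {0..l}" using V_zero by auto
  thus "norm (c * complex_of_real w) \<le> l" using that by (simp add: norm_mult)
qed

lemma kdQ: "kd lborel V (\<lambda>x. - \<i> * of_real x) l" by (rule kd_V) simp
lemma kdP: "kd lborel (\<lambda>x. cnj (V x)) (\<lambda>x. \<i> * of_real x) l" by (rule kd_Vc) simp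

lemma intQ: "integrable lborel (\<lambda>x. V x * cfun (z * (- \<i> * of_real x)))"
  "integrable lborel (\<lambda>x. V x * sfun (z * (- \<i> * of_real x)))"
  "integrable lborel (\<lambda>x. V x * dfun (z * (- \<i> * of_real x)))"
  using kd.int_c[OF kdQ] kd.int_s[OF kdQ] kd.int_d[OF kdQ] by auto
lemma intP: "integrable lborel (\<lambda>x. cnj (V x) * cfun (z * (\<i> * of_real x)))"
  "integrable lborel (\<lambda>x. cnj (V x) * sfun (z * (\<i> * of_real x)))"
  "integrable lborel (\<lambda>x. cnj (V x) * dfun (z * (\<i> * of_real x)))"
  using kd.int_c[OF kdP] kd.int_s[OF kdP] kd.int_d[OF kdP] by auto

lemma vc_eq: "vc l v z = Q cfun z"
  unfolding vc_def Q_def set_conv by (simp add: mult_ac)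
lemma vs_eq: "vs l v z = Q sfun z"
  unfolding vs_def Q_def set_conv by (simp add: mult_ac)
lemma vd_eq: "vd l v z = Q dfun z"
  unfolding vd_def Q_def set_conv by (simp add: mult_ac)

lemma star_Q:
  assumes f: "\<And>u. cnj (f (cnj u)) = f u"
  shows "cnj (Q f (cnj z)) = P f z"
proof -
  have "cnj (Q f (cnj z)) = (\<integral>x. cnj (V x * f (cnj z * (- \<i> * of_real x))) \<partial>lborel)"
    unfolding Q_def by (simp only: Bochner_Integration.integral_cnj)
  also have "\<dots> = P f z" unfolding P_def
  proof (rule Bochner_Integration.integral_cong[OF refl])
    fix x
    have "cnj (f (cnj z * (- \<i> * of_real x))) = f (z * (\<i> * of_real x))"
      using f[of "z * (\<i> * of_real x)"] by simp
    thus "cnj (V x * f (cnj z * (- \<i> * complex_of_real x))) = cnj (V x) * f (z * (\<i> * complex_of_real x))"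
      by simp
  qed
  finally show ?thesis .
qed

lemma star_vc: "star (vc l v) z = P cfun z"
  unfolding star_def vc_eq[abs_def] by (rule star_Q) (rule cfun_cnj)
lemma star_vs: "star (vs l v) z = P sfun z"
  unfolding star_def vs_eq[abs_def] by (rule star_Q) (rule sfun_cnj)
lemma star_vd: "star (vd l v) z = P dfun z"
  unfolding star_def vd_eq[abs_def] by (rule star_Q) (rule dfun_cnj)

lemma split_l: "\<i> * z * complex_of_real (l - t) = \<i> * z * of_real l + z * (- \<i> * of_real t)"
  by (simp add: algebra_simps)

lemma Is_eq: "(LINT t:{0..l}|lborel. sfun (\<i> * z * (l - t)) * v t) =
   cfun (\<i> * z * of_real l) * Q sfun z + sfun (\<i> * z * of_real l) * Q cfun z + dfun (\<i> * z * of_real l) * Q dfun z"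
proof -
  have "(LINT t:{0..l}|lborel. sfun (\<i> * z * (l - t)) * v t) =
     (\<integral>t. cfun (\<i> * z * of_real l) * (V t * sfun (z * (- \<i> * of_real t))) + sfun (\<i> * z * of_real l) * (V t * cfun (z * (- \<i> * of_real t)))
        + dfun (\<i> * z * of_real l) * (V t * dfun (z * (- \<i> * of_real t))) \<partial>lborel)"
    unfolding set_conv' by (rule Bochner_Integration.integral_cong[OF refl]) (simp only: split_l sfun_add, simp add: algebra_simps)
  also have "\<dots> = cfun (\<i> * z * of_real l) * Q sfun z + sfun (\<i> * z * of_real l) * Q cfun z + dfun (\<i> * z * of_real l) * Q dfun z"
    unfolding Q_def using intQ by simp
  finally show ?thesis .
qed

lemma Id_eq: "(LINT t:{0..l}|lborel. dfun (\<i> * z * (l - t)) * v t) =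
   cfun (\<i> * z * of_real l) * Q dfun z + dfun (\<i> * z * of_real l) * Q cfun z + sfun (\<i> * z * of_real l) * Q sfun z"
proof -
  have "(LINT t:{0..l}|lborel. dfun (\<i> * z * (l - t)) * v t) =
     (\<integral>t. cfun (\<i> * z * of_real l) * (V t * dfun (z * (- \<i> * of_real t))) + dfun (\<i> * z * of_real l) * (V t * cfun (z * (- \<i> * of_real t)))
        + sfun (\<i> * z * of_real l) * (V t * sfun (z * (- \<i> * of_real t))) \<partial>lborel)"
    unfolding set_conv' by (rule Bochner_Integration.integral_cong[OF refl]) (simp only: split_l dfun_add, simp add: algebra_simps)
  also have "\<dots> = cfun (\<i> * z * of_real l) * Q dfun z + dfun (\<i> * z * of_real l) * Q cfun z + sfun (\<i> * z * of_real l) * Q sfun z"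
    unfolding Q_def using intQ by simp
  finally show ?thesis .
qed

lemma wd_alt: "wd l v z = (\<integral>t. V t * dfun (- \<i> * z * of_real (l - t)) \<partial>lborel)"
proof -
  have "wd l v z = (\<integral>x. indicator {0..l} x *\<^sub>R (v (l - x) * dfun (- \<i> * z * of_real x)) \<partial>lborel)"
    unfolding wd_def vd_def set_lebesgue_integral_def ..
  also have "\<dots> = (\<integral>x. indicator {0..l} (l + (-1) * x) *\<^sub>R (v (l - (l + (-1) * x)) * dfun (- \<i> * z * of_real (l + (-1) * x))) \<partial>lborel)"
    using lborel_integral_real_affine[of "-1" "\<lambda>x. indicator {0..l} x *\<^sub>R (v (l - x) * dfun (- \<i> * z * of_real x))" l] by simp
  also have "\<dots> = (\<integral>t. V t * dfun (- \<i> * z * of_real (l - t)) \<partial>lborel)"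
    unfolding V_def by (rule Bochner_Integration.integral_cong) (auto split: split_indicator)
  finally show ?thesis .
qed

lemma wd_neg: "wd l v (- z) = (LINT t:{0..l}|lborel. dfun (\<i> * z * (l - t)) * v t)"
  unfolding wd_alt set_conv' by simp

lemma star_wd: "star (wd l v) (- z) = P cfun z * dfun (- (\<i> * z * of_real l)) + P dfun z * cfun (- (\<i> * z * of_real l))
   + P sfun z * sfun (- (\<i> * z * of_real l))"
proof -
  have "star (wd l v) (- z) = (\<integral>t. cnj (V t * dfun (- \<i> * (- cnj z) * of_real (l - t))) \<partial>lborel)"
    unfolding star_def wd_alt by (simp only: Bochner_Integration.integral_cnj complex_cnj_minus)
  also have "\<dots> = (\<integral>t. dfun (- (\<i> * z * of_real l)) * (cnj (V t) * cfun (z * (\<i> * of_real t))) +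
       cfun (- (\<i> * z * of_real l)) * (cnj (V t) * dfun (z * (\<i> * of_real t))) + sfun (- (\<i> * z * of_real l)) * (cnj (V t) * sfun (z * (\<i> * of_real t))) \<partial>lborel)"
  proof (rule Bochner_Integration.integral_cong[OF refl])
    fix t
    have "- \<i> * (- cnj z) * of_real (l - t) = cnj (z * (\<i> * of_real t) + (- (\<i> * z * of_real l)))"
      by (simp add: algebra_simps)
    hence e1: "cnj (dfun (- \<i> * (- cnj z) * of_real (l - t))) = dfun (z * (\<i> * of_real t) + (- (\<i> * z * of_real l)))"
      by (simp only: dfun_cnj)
    show "cnj (V t * dfun (- \<i> * (- cnj z) * of_real (l - t))) = dfun (- (\<i> * z * of_real l)) * (cnj (V t) * cfun (z * (\<i> * of_real t))) +
       cfun (- (\<i> * z * of_real l)) * (cnj (V t) * dfun (z * (\<i> * of_real t))) + sfun (- (\<i> * z * of_real l)) * (cnj (V t) * sfun (z * (\<i> * of_real t)))"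
      by (simp only: complex_cnj_mult e1 dfun_add) (simp add: algebra_simps)
  qed
  also have "\<dots> = dfun (- (\<i> * z * of_real l)) * P cfun z + cfun (- (\<i> * z * of_real l)) * P dfun z
   + sfun (- (\<i> * z * of_real l)) * P sfun z"
    unfolding P_def using intP by simp
  also have "\<dots> = P cfun z * dfun (- (\<i> * z * of_real l)) + P dfun z * cfun (- (\<i> * z * of_real l))
   + P sfun z * sfun (- (\<i> * z * of_real l))" by (simp add: mult.commute)
  finally show ?thesis .
qed

end


context prob begin

definition Gk :: "(real \<times> real \<Rightarrow> complex) \<Rightarrow> real \<times> real \<Rightarrow> complex" where
  "Gk k p = cnj (V (fst p)) * V (snd p) * k p"
definition \<psi>m :: "real \<times> real \<Rightarrow> complex" where
  "\<psi>m p = \<i> * of_real (fst p - snd p)"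

abbreviation "PM \<equiv> lborel \<Otimes>\<^sub>M lborel"

lemma V_meas_borel[measurable]: "V \<in> borel_measurable borel"
  using V_meas by simp

lemma Gk_int: "integrable PM (Gk k)" if "k \<in> borel_measurable PM" "\<And>p. norm (k p) \<le> 1"
  unfolding Gk_def[abs_def] by (rule pair_int[OF Vc_int V_int that])

lemma kd_pair: "kd PM (Gk k) (\<lambda>p. c * of_real (fst p - snd p)) l"
  if k: "k \<in> borel_measurable PM" "\<And>p. norm (k p) \<le> 1" and c: "norm c = 1"
proof
  show "integrable PM (Gk k)" by (rule Gk_int[OF k])
  show "(\<lambda>p. c * complex_of_real (fst p - snd p)) \<in> borel_measurable PM" by measurable
  fix p assume "p \<in> space PM" "Gk k p \<noteq> 0"
  hence "V (fst p) \<noteq> 0" "V (snd p) \<noteq> 0" unfolding Gk_def by auto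
  hence "fst p \<in> {0..l}" "snd p \<in> {0..l}" using V_zero by auto
  hence "\<bar>fst p - snd p\<bar> \<le> l" by auto
  thus "norm (c * complex_of_real (fst p - snd p)) \<le> l" using c by (simp add: norm_mult del: of_real_diff)
qed

definition tri :: "real \<times> real \<Rightarrow> complex" where "tri p = (if snd p \<le> fst p then 1 else 0)"
definition tri' :: "real \<times> real \<Rightarrow> complex" where "tri' p = (if fst p \<le> snd p then 1 else 0)"

lemma tri_meas[measurable]: "tri \<in> borel_measurable PM" "tri' \<in> borel_measurable PM"
  unfolding tri_def[abs_def] tri'_def[abs_def] by measurable

lemma kd_tri: "kd PM (Gk tri) \<psi>m l"
  using kd_pair[of tri \<i>] unfolding \<psi>m_def[abs_def] by (auto simp: tri_def)
lemma kd_tri': "kd PM (Gk tri') \<psi>m l"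
  using kd_pair[of tri' \<i>] unfolding \<psi>m_def[abs_def] by (auto simp: tri'_def)
lemma kd_one: "kd PM (Gk (\<lambda>_. 1)) \<psi>m l"
  using kd_pair[of "\<lambda>_. 1" \<i>] unfolding \<psi>m_def[abs_def] by auto

lemma mfun_rep: "mfun l v z = KD PM (Gk tri) \<psi>m z"
proof -
  have "mfun l v z = (\<integral>x. (\<integral>t. Gk tri (x, t) * dfun (z * \<psi>m (x, t)) \<partial>lborel) \<partial>lborel)"
    unfolding mfun_def set_lebesgue_integral_def
  proof (rule Bochner_Integration.integral_cong[OF refl])
    fix x
    show "indicator {0..l} x *\<^sub>R (cnj (v x) * (\<integral>t. indicator {0..x} t *\<^sub>R (dfun (\<i> * z * complex_of_real (x - t)) * v t) \<partial>lborel))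
        = (\<integral>t. Gk tri (x, t) * dfun (z * \<psi>m (x, t)) \<partial>lborel)"
    proof (cases "x \<in> {0..l}")
      case True
      have "(\<integral>t. Gk tri (x, t) * dfun (z * \<psi>m (x, t)) \<partial>lborel) =
            (\<integral>t. cnj (v x) * (indicator {0..x} t *\<^sub>R (dfun (\<i> * z * complex_of_real (x - t)) * v t)) \<partial>lborel)"
        using True unfolding Gk_def tri_def \<psi>m_def V_def
        by (intro Bochner_Integration.integral_cong) (auto split: split_indicator simp: mult_ac)
      also have "\<dots> = cnj (v x) * (\<integral>t. indicator {0..x} t *\<^sub>R (dfun (\<i> * z * complex_of_real (x - t)) * v t) \<partial>lborel)"
        by (rule integral_mult_right_zero)
      finally show ?thesis using True by simp
    next
      case False
      hence "V x = 0" using V_zero by blast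
      thus ?thesis using False unfolding Gk_def by simp
    qed
  qed
  also have "\<dots> = KD PM (Gk tri) \<psi>m z"
    unfolding KD_def using lborel_pair.integral_fst'[OF kd.int_d[OF kd_tri, of z]] by simp
  finally show ?thesis .
qed

lemma star_mfun_rep: "star (mfun l v) z = KD PM (Gk tri') \<psi>m z"
proof -
  have "star (mfun l v) z = KD PM (\<lambda>p. cnj (Gk tri p)) (\<lambda>p. cnj (\<psi>m p)) z"
    unfolding star_def mfun_rep[abs_def] by (rule KD_cnj)
  also have "\<dots> = (\<integral>(x,y). cnj (Gk tri (y, x)) * dfun (z * cnj (\<psi>m (y, x))) \<partial>PM)"
  proof -
    have g[measurable]: "Gk tri \<in> borel_measurable PM" using kd.g[OF kd_tri] by (rule borel_measurable_integrable)
    have ps[measurable]: "\<psi>m \<in> borel_measurable PM" using kd.\<psi>[OF kd_tri] .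
    have c1: "continuous_on UNIV (\<lambda>u::complex. cnj u)" by (intro continuous_intros)
    have c2: "continuous_on UNIV (\<lambda>u. dfun (z * cnj u))"
    proof -
      have "continuous_on UNIV (\<lambda>u. z * cnj u)" by (intro continuous_intros)
      moreover have "continuous_on (range (\<lambda>u. z * cnj u)) dfun" using cont_dfun continuous_on_subset by blast
      ultimately show ?thesis using continuous_on_compose[of UNIV "\<lambda>u. z * cnj u" dfun] by (simp add: comp_def)
    qed
    have m1: "(\<lambda>p. cnj (Gk tri p) * dfun (z * cnj (\<psi>m p))) \<in> borel_measurable PM"
      by (rule borel_measurable_times[OF borel_measurable_continuous_on[OF c1 g] borel_measurable_continuous_on[OF c2 ps]])
    show ?thesis unfolding KD_def by (rule lborel_pair.integral_product_swap[symmetric, OF m1])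
  qed
  also have "\<dots> = KD PM (Gk tri') \<psi>m z"
    unfolding KD_def by (rule Bochner_Integration.integral_cong) (auto simp: Gk_def tri_def tri'_def \<psi>m_def algebra_simps)
  finally show ?thesis .
qed

lemma m_sum: "mfun l v z + star (mfun l v) z = P cfun z * Q dfun z + P dfun z * Q cfun z + P sfun z * Q sfun z"
proof -
  have "mfun l v z + star (mfun l v) z = (\<integral>p. Gk tri p * dfun (z * \<psi>m p) + Gk tri' p * dfun (z * \<psi>m p) \<partial>PM)"
    unfolding mfun_rep star_mfun_rep KD_def
    using kd.int_d[OF kd_tri, of z] kd.int_d[OF kd_tri', of z] by simp
  also have "\<dots> = (\<integral>p. (cnj (V (fst p)) * cfun (z * (\<i> * of_real (fst p)))) * (V (snd p) * dfun (z * (- \<i> * of_real (snd p))))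
     + (cnj (V (fst p)) * dfun (z * (\<i> * of_real (fst p)))) * (V (snd p) * cfun (z * (- \<i> * of_real (snd p))))
     + (cnj (V (fst p)) * sfun (z * (\<i> * of_real (fst p)))) * (V (snd p) * sfun (z * (- \<i> * of_real (snd p)))) \<partial>PM)"
  proof (rule Bochner_Integration.integral_cong[OF refl])
    fix p :: "real \<times> real"
    have e: "z * \<psi>m p = z * (\<i> * of_real (fst p)) + z * (- \<i> * of_real (snd p))"
      unfolding \<psi>m_def by (simp add: algebra_simps)
    have "Gk tri p * dfun (z * \<psi>m p) + Gk tri' p * dfun (z * \<psi>m p) = cnj (V (fst p)) * V (snd p) * dfun (z * \<psi>m p)"
    proof (cases "fst p = snd p")
      case True
      hence "\<psi>m p = 0" unfolding \<psi>m_def by simp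
      thus ?thesis by (simp add: fun0)
    next
      case False
      thus ?thesis unfolding Gk_def tri_def tri'_def by (auto simp: algebra_simps)
    qed
    also have "\<dots> = (cnj (V (fst p)) * cfun (z * (\<i> * of_real (fst p)))) * (V (snd p) * dfun (z * (- \<i> * of_real (snd p))))
     + (cnj (V (fst p)) * dfun (z * (\<i> * of_real (fst p)))) * (V (snd p) * cfun (z * (- \<i> * of_real (snd p))))
     + (cnj (V (fst p)) * sfun (z * (\<i> * of_real (fst p)))) * (V (snd p) * sfun (z * (- \<i> * of_real (snd p))))"
      by (simp only: e dfun_add) (simp add: algebra_simps)
    finally show "Gk tri p * dfun (z * \<psi>m p) + Gk tri' p * dfun (z * \<psi>m p) = \<dots>" .
  qed
  also have "\<dots> = P cfun z * Q dfun z + P dfun z * Q cfun z + P sfun z * Q sfun z"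
  proof -
    have i1: "integrable PM (\<lambda>p. (cnj (V (fst p)) * f (z * (\<i> * of_real (fst p)))) * (V (snd p) * g (z * (- \<i> * of_real (snd p)))))"
      if "integrable lborel (\<lambda>x. cnj (V x) * f (z * (\<i> * of_real x)))" "integrable lborel (\<lambda>x. V x * g (z * (- \<i> * of_real x)))" for f g
      using pair_int[OF that, of "\<lambda>_. 1"] by simp
    have p1: "(\<integral>p. (cnj (V (fst p)) * f (z * (\<i> * of_real (fst p)))) * (V (snd p) * g (z * (- \<i> * of_real (snd p)))) \<partial>PM) = P f z * Q g z"
      if "integrable lborel (\<lambda>x. cnj (V x) * f (z * (\<i> * of_real x)))" "integrable lborel (\<lambda>x. V x * g (z * (- \<i> * of_real x)))" for f g
      unfolding P_def Q_def by (rule pair_prod[OF that])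
    show ?thesis
      using i1[OF intP(1) intQ(3)] i1[OF intP(3) intQ(1)] i1[OF intP(2) intQ(2)]
        p1[OF intP(1) intQ(3)] p1[OF intP(3) intQ(1)] p1[OF intP(2) intQ(2)] by simp
  qed
  finally show ?thesis .
qed

end


lemma alg_final0:
  fixes z j a Pc Ps Pd Qc Qs Qd m C S D :: complex
  assumes j: "j^2 = -1" and z: "z \<noteq> 0"
  shows "(j*Ps/z)*(j*S/z)*(j*a/z^2 * (C*Qd + D*Qc + S*Qs)) + (Pd/z^2)*(- (a/z) * (C*Qs + S*Qc + D*Qd))*(j*S/z) + (1 + j*a*m/z^2)*(1 - C)*(D/z^2) - (j*Ps/z)*(- (a/z) * (C*Qs + S*Qc + D*Qd))*(D/z^2) - (Pd/z^2)*(1 - C)*(j*a/z^2 * (C*Qd + D*Qc + S*Qs)) - (1 + j*a*m/z^2)*(j*S/z)*(j*S/z) = (D + (S^2 - C*D))/z^2 + j*a/z^4 * ((m*D + Qd*(Pc*(S^2 - C*D) + Pd*(C^2 - S*D) + Ps*(D^2 - C*S))) - ((Pc*Qd + Pd*Qc + Ps*Qs - m)*(S^2 - C*D) + Pd*(C*Qd + D*Qc + S*Qs)))"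
proof -
  define t where "t = inverse z"
  have "(j*Ps*t)*(j*S*t)*(j*a*t^2 * (C*Qd + D*Qc + S*Qs)) + (Pd*t^2)*(- (a*t) * (C*Qs + S*Qc + D*Qd))*(j*S*t) + (1 + j*a*m*t^2)*(1 - C)*(D*t^2) - (j*Ps*t)*(- (a*t) * (C*Qs + S*Qc + D*Qd))*(D*t^2) - (Pd*t^2)*(1 - C)*(j*a*t^2 * (C*Qd + D*Qc + S*Qs)) - (1 + j*a*m*t^2)*(j*S*t)*(j*S*t) = (D + (S^2 - C*D))*t^2 + j*a*t^4 * ((m*D + Qd*(Pc*(S^2 - C*D) + Pd*(C^2 - S*D) + Ps*(D^2 - C*S))) - ((Pc*Qd + Pd*Qc + Ps*Qs - m)*(S^2 - C*D) + Pd*(C*Qd + D*Qc + S*Qs)))"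
    using j by algebra
  thus ?thesis unfolding t_def divide_inverse power_inverse .
qed

definition DET :: "complex \<Rightarrow> complex \<Rightarrow> complex \<Rightarrow> complex \<Rightarrow> complex \<Rightarrow> complex \<Rightarrow> complex \<Rightarrow> complex \<Rightarrow> complex \<Rightarrow> complex \<Rightarrow> complex \<Rightarrow> complex \<Rightarrow> complex" where
  "DET a z Pc Ps Pd Qc Qs Qd m C S D = (\<i>*Ps/z)*(\<i>*S/z)*(\<i>*a/z^2 * (C*Qd + D*Qc + S*Qs)) + (Pd/z^2)*(- (a/z) * (C*Qs + S*Qc + D*Qd))*(\<i>*S/z) + (1 + \<i>*a*m/z^2)*(1 - C)*(D/z^2) - (\<i>*Ps/z)*(- (a/z) * (C*Qs + S*Qc + D*Qd))*(D/z^2) - (Pd/z^2)*(1 - C)*(\<i>*a/z^2 * (C*Qd + D*Qc + S*Qs)) - (1 + \<i>*a*m/z^2)*(\<i>*S/z)*(\<i>*S/z)"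
definition RHSF :: "complex \<Rightarrow> complex \<Rightarrow> complex \<Rightarrow> complex \<Rightarrow> complex \<Rightarrow> complex \<Rightarrow> complex \<Rightarrow> complex \<Rightarrow> complex \<Rightarrow> complex \<Rightarrow> complex \<Rightarrow> complex \<Rightarrow> complex" where
  "RHSF a z Pc Ps Pd Qc Qs Qd m C S D = (D + (S^2 - C*D))/z^2 + \<i>*a/z^4 * ((m*D + Qd*(Pc*(S^2 - C*D) + Pd*(C^2 - S*D) + Ps*(D^2 - C*S))) - ((Pc*Qd + Pd*Qc + Ps*Qs - m)*(S^2 - C*D) + Pd*(C*Qd + D*Qc + S*Qs)))"

lemma alg_final: "z \<noteq> 0 \<Longrightarrow> DET a z Pc Ps Pd Qc Qs Qd m C S D = RHSF a z Pc Ps Pd Qc Qs Qd m C S D"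
  unfolding DET_def RHSF_def by (rule alg_final0) simp_all

context prob begin

lemma star_F: "star (Ffun l v) z = star (mfun l v) z * dfun (- (\<i> * z * of_real l)) + P dfun z * wd l v (- z)"
proof -
  have e1: "cnj (dfun (\<i> * cnj z * of_real l)) = dfun (- (\<i> * z * of_real l))"
    using dfun_cnj[of "- (\<i> * z * of_real l)"] by simp
  have e2: "cnj (star (wd l v) (- cnj z)) = wd l v (- z)" unfolding star_def by simp
  have e3: "cnj (vd l v (cnj z)) = P dfun z" using star_vd[of z] unfolding star_def .
  show ?thesis unfolding Ffun_def star_def[of "Ffun l v"]
    by (simp only: complex_cnj_add complex_cnj_mult e1 e2 e3) (simp add: star_def)
qed

lemma det_eq: "det (coeff_matrix l v \<alpha> z) = DET (of_real \<alpha>) z (P cfun z) (P sfun z) (P dfun z) (Q cfun z) (Q sfun z) (Q dfun z)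
    (mfun l v z) (cfun (\<i> * z * of_real l)) (sfun (\<i> * z * of_real l)) (dfun (\<i> * z * of_real l))"
  unfolding coeff_matrix_def det_3 DET_def vector_3 star_vs star_vd of_real_diff[symmetric] Is_eq Id_eq
  by simp

lemma Delta_eq: "Delta l v \<alpha> z = RHSF (of_real \<alpha>) z (P cfun z) (P sfun z) (P dfun z) (Q cfun z) (Q sfun z) (Q dfun z)
    (mfun l v z) (cfun (\<i> * z * of_real l)) (sfun (\<i> * z * of_real l)) (dfun (\<i> * z * of_real l))"
proof -
  have sm: "star (mfun l v) z = P cfun z * Q dfun z + P dfun z * Q cfun z + P sfun z * Q sfun z - mfun l v z"
    using m_sum[of z] by (simp add: algebra_simps)
  have n: "- \<i> * z * of_real l = - (\<i> * z * of_real l)" by simp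
  show ?thesis
    unfolding Delta_def Delta0_def Ffun_def star_F sm vd_eq star_wd wd_neg Id_eq n cfun_neg sfun_neg dfun_neg RHSF_def
    by simp
qed

theorem part1: "z \<noteq> 0 \<Longrightarrow> det (coeff_matrix l v \<alpha> z) = Delta l v \<alpha> z"
  unfolding det_eq Delta_eq by (rule alg_final)

end


lemma hderiv: "f holomorphic_on UNIV \<Longrightarrow> (f has_field_derivative deriv f x) (at x)"
  by (rule holomorphic_derivI) auto

lemma divz:
  assumes f: "f holomorphic_on UNIV" and f0: "f 0 = 0"
  shows "\<exists>g. g holomorphic_on UNIV \<and> (\<forall>z. z \<noteq> 0 \<longrightarrow> g z = f z / z) \<and> g 0 = deriv f 0"
proof -
  have "(\<lambda>z. if z = 0 then deriv f 0 else (f z - f 0) / (z - 0)) holomorphic_on UNIV"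
    by (rule pole_lemma[OF f]) simp
  thus ?thesis using f0 by (intro exI[of _ "\<lambda>z. if z = 0 then deriv f 0 else (f z - f 0) / (z - 0)"]) auto
qed

lemma deriv_sym0:
  assumes f: "f holomorphic_on UNIV" and s: "\<And>z. f (\<zeta> * z) = \<mu> * f z" and m: "\<mu> \<noteq> \<zeta>"
  shows "deriv f 0 = 0"
proof -
  have d0: "(f has_field_derivative deriv f 0) (at (\<zeta> * 0))" using hderiv[OF f] by simp
  have dg: "((\<lambda>z. \<zeta> * z) has_field_derivative \<zeta>) (at 0)" by (auto intro!: derivative_eq_intros)
  have "((\<lambda>z. f (\<zeta> * z)) has_field_derivative deriv f 0 * \<zeta>) (at 0)"
    using DERIV_chain2[of f "deriv f 0" "\<lambda>z. \<zeta> * z" 0 \<zeta> UNIV] d0 dg by simp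
  moreover have "((\<lambda>z. f (\<zeta> * z)) has_field_derivative \<mu> * deriv f 0) (at 0)"
    unfolding s by (rule DERIV_cmult[OF hderiv[OF f]])
  ultimately have "deriv f 0 * \<zeta> = \<mu> * deriv f 0" by (rule DERIV_unique)
  hence "(\<zeta> - \<mu>) * deriv f 0 = 0" by (simp add: algebra_simps)
  thus ?thesis using m by simp
qed

lemma sym_div:
  assumes s: "\<And>z. f (\<zeta> * z) = \<mu> * f z" and g0: "g 0 = 0" and g: "\<forall>z. z \<noteq> 0 \<longrightarrow> g z = f z / z"
  shows "g (\<zeta> * z) = (\<mu> * \<zeta>^2) * g z"
proof (cases "z = 0")
  case True thus ?thesis using g0 by simp
next
  case False
  hence "\<zeta> * z \<noteq> 0" using zeta_ne0 by simp
  hence "g (\<zeta> * z) = \<mu> * f z / (\<zeta> * z)" using g s by simp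
  also have "\<dots> = (\<mu> * inverse \<zeta>) * (f z / z)" by (simp add: field_simps)
  also have "\<dots> = (\<mu> * \<zeta>^2) * g z" using g False by (simp add: zeta_inv)
  finally show ?thesis .
qed

lemma zeta_sq_ne: "\<zeta>^2 \<noteq> \<zeta>"
proof
  assume "\<zeta>^2 = \<zeta>"
  hence "\<zeta> * (\<zeta> - 1) = 0" by (simp add: algebra_simps power2_eq_square)
  thus False using zeta_ne0 zeta_ne1 by simp
qed

lemma remov:
  assumes G: "G holomorphic_on UNIV" and G0: "G 0 = 0" and dG: "deriv G 0 = 0"
    and s: "\<And>z. G (\<zeta> * z) = \<zeta> * G z"
  shows "\<exists>D. D holomorphic_on UNIV \<and> (\<forall>z. z \<noteq> 0 \<longrightarrow> D z = G z / z^4)"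
proof -
  obtain G1 where G1: "G1 holomorphic_on UNIV" "\<forall>z. z \<noteq> 0 \<longrightarrow> G1 z = G z / z" "G1 0 = deriv G 0"
    using divz[OF G G0] by blast
  have G10: "G1 0 = 0" using G1 dG by simp
  have s1: "G1 (\<zeta> * z) = 1 * G1 z" for z
    using sym_div[OF s G10 G1(2), of z] zeta_cube by (simp add: power3_eq_cube power2_eq_square mult.assoc)
  have dG1: "deriv G1 0 = 0" by (rule deriv_sym0[OF G1(1) s1]) (use zeta_ne1 in auto)
  obtain G2 where G2: "G2 holomorphic_on UNIV" "\<forall>z. z \<noteq> 0 \<longrightarrow> G2 z = G1 z / z" "G2 0 = deriv G1 0"
    using divz[OF G1(1) G10] by blast
  have G20: "G2 0 = 0" using G2 dG1 by simp
  have s2: "G2 (\<zeta> * z) = \<zeta>^2 * G2 z" for z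
    using sym_div[OF s1 G20 G2(2), of z] by simp
  have dG2: "deriv G2 0 = 0" by (rule deriv_sym0[OF G2(1) s2]) (use zeta_sq_ne in auto)
  obtain G3 where G3: "G3 holomorphic_on UNIV" "\<forall>z. z \<noteq> 0 \<longrightarrow> G3 z = G2 z / z" "G3 0 = deriv G2 0"
    using divz[OF G2(1) G20] by blast
  have G30: "G3 0 = 0" using G3 dG2 by simp
  obtain G4 where G4: "G4 holomorphic_on UNIV" "\<forall>z. z \<noteq> 0 \<longrightarrow> G4 z = G3 z / z" "G4 0 = deriv G3 0"
    using divz[OF G3(1) G30] by blast
  have "G4 z = G z / z^4" if "z \<noteq> 0" for z
    using that G1(2) G2(2) G3(2) G4(2) by (simp add: field_simps eval_nat_numeral)
  thus ?thesis using G4(1) by blast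
qed

lemma prod0:
  assumes "f holomorphic_on UNIV" "g holomorphic_on UNIV" "f 0 = 0" "g 0 = 0"
  shows "((\<lambda>z. f z * g z) has_field_derivative 0) (at 0)"
  using DERIV_mult[OF hderiv[OF assms(1), of 0] hderiv[OF assms(2), of 0]] assms(3,4) by simp


lemma scale_alg: "(q*z)^2 * (q^2*a + q^2*b) + c*((q^2*m1*(q^2*k1) + q^2*m2*(q^2*m3)) - (q^2*m4*(q^2*k2) + q^2*m5*(q^2*m6)))
   = q^4 * (z^2*(a+b) + c*((m1*k1 + m2*m3) - (m4*k2+m5*m6)))" for q :: complex
  by algebra

context prob begin

lemma kd_Vl: "kd lborel V (\<lambda>t. c * of_real (l - t)) l" if "norm c = 1"
proof
  show "integrable lborel V" by (rule V_int)
  show "(\<lambda>t. c * complex_of_real (l - t)) \<in> borel_measurable lborel" by measurable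
  fix w assume "w \<in> space lborel" "V w \<noteq> 0"
  hence "w \<in> {0..l}" using V_zero by auto
  thus "norm (c * complex_of_real (l - w)) \<le> l" using that by (simp add: norm_mult del: of_real_diff)
qed
lemma kd_Vcl: "kd lborel (\<lambda>x. cnj (V x)) (\<lambda>t. c * of_real (l - t)) l" if "norm c = 1"
proof
  show "integrable lborel (\<lambda>x. cnj (V x))" by (rule Vc_int)
  show "(\<lambda>t. c * complex_of_real (l - t)) \<in> borel_measurable lborel" by measurable
  fix w assume "w \<in> space lborel" "cnj (V w) \<noteq> 0"
  hence "w \<in> {0..l}" using V_zero by auto
  thus "norm (c * complex_of_real (l - w)) \<le> l" using that by (simp add: norm_mult del: of_real_diff)
qed

definition "M1 = KD PM (Gk tri) \<psi>m"
definition "M4 = KD PM (Gk tri') \<psi>m"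
definition "M2 = KD lborel V (\<lambda>x. - \<i> * of_real x)"
definition "M5 = KD lborel (\<lambda>x. cnj (V x)) (\<lambda>x. \<i> * of_real x)"
definition "M3 = KD lborel (\<lambda>x. cnj (V x)) (\<lambda>t. - \<i> * of_real (l - t))"
definition "M6 = KD lborel V (\<lambda>t. \<i> * of_real (l - t))"

lemma kds: "kd PM (Gk tri) \<psi>m l" "kd PM (Gk tri') \<psi>m l" "kd lborel V (\<lambda>x. - \<i> * of_real x) l"
  "kd lborel (\<lambda>x. cnj (V x)) (\<lambda>x. \<i> * of_real x) l" "kd lborel (\<lambda>x. cnj (V x)) (\<lambda>t. - \<i> * of_real (l - t)) l"
  "kd lborel V (\<lambda>t. \<i> * of_real (l - t)) l"
  using kd_tri kd_tri' kdQ kdP kd_Vcl[of "- \<i>"] kd_Vl[of \<i>] by auto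

lemma reps: "mfun l v z = M1 z" "star (mfun l v) z = M4 z" "vd l v z = M2 z" "P dfun z = M5 z"
   "star (wd l v) (- z) = M3 z" "wd l v (- z) = M6 z"
proof -
  show "mfun l v z = M1 z" unfolding M1_def by (rule mfun_rep)
  show "star (mfun l v) z = M4 z" unfolding M4_def by (rule star_mfun_rep)
  show "vd l v z = M2 z" unfolding M2_def vd_eq Q_def KD_def by (simp add: mult_ac)
  show "P dfun z = M5 z" unfolding M5_def P_def KD_def by (simp add: mult_ac)
  show "wd l v (- z) = M6 z" unfolding M6_def wd_alt KD_def
    by (rule Bochner_Integration.integral_cong) (auto simp: mult_ac simp del: of_real_diff)
  have "star (wd l v) (- z) = (\<integral>t. cnj (V t * dfun (- \<i> * (- cnj z) * of_real (l - t))) \<partial>lborel)"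
    unfolding star_def wd_alt by (simp only: Bochner_Integration.integral_cnj complex_cnj_minus)
  also have "\<dots> = M3 z" unfolding M3_def KD_def
  proof (rule Bochner_Integration.integral_cong[OF refl])
    fix t
    have "- \<i> * (- cnj z) * of_real (l - t) = cnj (z * (- \<i> * of_real (l - t)))" by simp
    hence "cnj (dfun (- \<i> * (- cnj z) * of_real (l - t))) = dfun (z * (- \<i> * of_real (l - t)))"
      by (simp only: dfun_cnj)
    thus "cnj (V t * dfun (- \<i> * (- cnj z) * of_real (l - t))) = cnj (V t) * dfun (z * (- \<i> * of_real (l - t)))"
      by simp
  qed
  finally show "star (wd l v) (- z) = M3 z" .
qed

definition "K1 z = dfun (\<i> * z * of_real l)"
definition "K2 z = dfun (- (\<i> * z * of_real l))"

definition "GG \<alpha> z = z^2 * (K1 z + K2 z) + \<i> * of_real \<alpha> * ((M1 z * K1 z + M2 z * M3 z) - (M4 z * K2 z + M5 z * M6 z))"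

lemma hols: "M1 holomorphic_on UNIV" "M2 holomorphic_on UNIV" "M3 holomorphic_on UNIV"
  "M4 holomorphic_on UNIV" "M5 holomorphic_on UNIV" "M6 holomorphic_on UNIV"
  "K1 holomorphic_on UNIV" "K2 holomorphic_on UNIV"
  unfolding M1_def M2_def M3_def M4_def M5_def M6_def
  using kd.KD_hol[OF kds(1)] kd.KD_hol[OF kds(2)] kd.KD_hol[OF kds(3)] kd.KD_hol[OF kds(4)]
    kd.KD_hol[OF kds(5)] kd.KD_hol[OF kds(6)] apply auto
  unfolding K1_def[abs_def] K2_def[abs_def] by (intro holomorphic_intros)+

lemma zeros: "M1 0 = 0" "M2 0 = 0" "M3 0 = 0" "M4 0 = 0" "M5 0 = 0" "M6 0 = 0" "K1 0 = 0" "K2 0 = 0"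
  unfolding M1_def M2_def M3_def M4_def M5_def M6_def
  using kd.KD_0[OF kds(1)] kd.KD_0[OF kds(2)] kd.KD_0[OF kds(3)] kd.KD_0[OF kds(4)]
    kd.KD_0[OF kds(5)] kd.KD_0[OF kds(6)] by (auto simp: K1_def K2_def fun0)

lemma scales: "M1 (\<zeta>*z) = \<zeta>^2 * M1 z" "M2 (\<zeta>*z) = \<zeta>^2 * M2 z" "M3 (\<zeta>*z) = \<zeta>^2 * M3 z"
  "M4 (\<zeta>*z) = \<zeta>^2 * M4 z" "M5 (\<zeta>*z) = \<zeta>^2 * M5 z" "M6 (\<zeta>*z) = \<zeta>^2 * M6 z"
  "K1 (\<zeta>*z) = \<zeta>^2 * K1 z" "K2 (\<zeta>*z) = \<zeta>^2 * K2 z"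
proof -
  show "M1 (\<zeta>*z) = \<zeta>^2 * M1 z" "M2 (\<zeta>*z) = \<zeta>^2 * M2 z" "M3 (\<zeta>*z) = \<zeta>^2 * M3 z"
    "M4 (\<zeta>*z) = \<zeta>^2 * M4 z" "M5 (\<zeta>*z) = \<zeta>^2 * M5 z" "M6 (\<zeta>*z) = \<zeta>^2 * M6 z"
    unfolding M1_def M2_def M3_def M4_def M5_def M6_def
    using kd.KD_scale[OF kds(1)] kd.KD_scale[OF kds(2)] kd.KD_scale[OF kds(3)] kd.KD_scale[OF kds(4)]
      kd.KD_scale[OF kds(5)] kd.KD_scale[OF kds(6)] by auto
  have "\<i> * (\<zeta> * z) * of_real l = \<zeta> * (\<i> * z * of_real l)" by (simp add: mult_ac)
  thus "K1 (\<zeta>*z) = \<zeta>^2 * K1 z" unfolding K1_def by (simp only: dfun_scale)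
  have "- (\<i> * (\<zeta> * z) * of_real l) = \<zeta> * (- (\<i> * z * of_real l))" by (simp add: mult_ac)
  thus "K2 (\<zeta>*z) = \<zeta>^2 * K2 z" unfolding K2_def by (simp only: dfun_scale)
qed

lemma GG_hol: "GG \<alpha> holomorphic_on UNIV"
  unfolding GG_def[abs_def] using hols by (intro holomorphic_intros) auto

lemma GG_0: "GG \<alpha> 0 = 0"
  unfolding GG_def by (simp add: zeros)

lemma GG_deriv: "deriv (GG \<alpha>) 0 = 0"
proof -
  have h2: "(\<lambda>z. z^2) holomorphic_on UNIV" by (intro holomorphic_intros)
  have hK: "(\<lambda>z. K1 z + K2 z) holomorphic_on UNIV" using hols by (intro holomorphic_intros) auto
  have d1: "((\<lambda>z. z^2 * (K1 z + K2 z)) has_field_derivative 0) (at 0)"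
    by (rule prod0[OF h2 hK]) (simp_all add: zeros)
  have d2: "((\<lambda>z. M1 z * K1 z) has_field_derivative 0) (at 0)" by (rule prod0) (simp_all add: hols zeros)
  have d3: "((\<lambda>z. M2 z * M3 z) has_field_derivative 0) (at 0)" by (rule prod0) (simp_all add: hols zeros)
  have d4: "((\<lambda>z. M4 z * K2 z) has_field_derivative 0) (at 0)" by (rule prod0) (simp_all add: hols zeros)
  have d5: "((\<lambda>z. M5 z * M6 z) has_field_derivative 0) (at 0)" by (rule prod0) (simp_all add: hols zeros)
  have "((\<lambda>z. (M1 z * K1 z + M2 z * M3 z) - (M4 z * K2 z + M5 z * M6 z)) has_field_derivative (0 + 0) - (0 + 0)) (at 0)"
    by (intro DERIV_diff DERIV_add d2 d3 d4 d5)
  hence "((\<lambda>z. \<i> * of_real \<alpha> * ((M1 z * K1 z + M2 z * M3 z) - (M4 z * K2 z + M5 z * M6 z))) has_field_derivative \<i> * of_real \<alpha> * ((0 + 0) - (0 + 0))) (at 0)"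
    by (rule DERIV_cmult)
  hence "(GG \<alpha> has_field_derivative 0 + \<i> * of_real \<alpha> * ((0 + 0) - (0 + 0))) (at 0)"
    unfolding GG_def[abs_def] by (rule DERIV_add[OF d1])
  thus ?thesis by (simp add: DERIV_imp_deriv)
qed

lemma GG_scale: "GG \<alpha> (\<zeta> * z) = \<zeta> * GG \<alpha> z"
  unfolding GG_def scales scale_alg zeta4 ..

lemma Delta_GG: "z \<noteq> 0 \<Longrightarrow> Delta l v \<alpha> z = GG \<alpha> z / z^4"
proof -
  assume z: "z \<noteq> 0"
  have n: "- \<i> * z * of_real l = - (\<i> * z * of_real l)" by simp
  have "Delta l v \<alpha> z = (K1 z + K2 z) / z^2 + \<i> * of_real \<alpha> / z^4 * ((M1 z * K1 z + M2 z * M3 z) - (M4 z * K2 z + M5 z * M6 z))"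
    unfolding Delta_def Delta0_def Ffun_def star_F reps n K1_def K2_def ..
  also have "\<dots> = GG \<alpha> z / z^4" unfolding GG_def using z by (simp add: field_simps eval_nat_numeral)
  finally show ?thesis .
qed

end


lemma nm: "norm (a::complex) \<le> A \<Longrightarrow> norm b \<le> B \<Longrightarrow> norm (a * b) \<le> A * B"
  by (simp add: norm_mult mult_mono' order_trans[OF norm_ge_zero])
  
context prob begin

lemma GG_bound: "\<exists>A B. 0 \<le> B \<and> (\<forall>z. norm (GG \<alpha> z) \<le> A * exp (B * norm z))"
proof -
  define N where "N = (\<integral>w. norm (Gk tri w) \<partial>PM) + (\<integral>w. norm (Gk tri' w) \<partial>PM) + (\<integral>w. norm (V w) \<partial>lborel)
     + (\<integral>w. norm (cnj (V w)) \<partial>lborel) + (\<integral>w. norm (cnj (V w)) \<partial>lborel) + (\<integral>w. norm (V w) \<partial>lborel)"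
  have n1: "0 \<le> (\<integral>w. norm (Gk tri w) \<partial>PM)" "0 \<le> (\<integral>w. norm (Gk tri' w) \<partial>PM)"
    "0 \<le> (\<integral>w. norm (V w) \<partial>lborel)" "0 \<le> (\<integral>w. norm (cnj (V w)) \<partial>lborel)"
    by (simp_all add: integral_nonneg_AE)
  have N0: "0 \<le> N" unfolding N_def using n1 by linarith
  define A where "A = 2 + \<bar>\<alpha>\<bar> * (2 * N + 2 * N^2)"
  define B where "B = 2 + 2 * l"
  have B0: "0 \<le> B" using l by (simp add: B_def)
  have "norm (GG \<alpha> z) \<le> A * exp (B * norm z)" for z
  proof -
    define x where "x = norm z"
    define E where "E = exp (x * l)"
    have x0: "0 \<le> x" by (simp add: x_def)
    have E0: "0 \<le> E" by (simp add: E_def)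
    have bM: "norm (M1 z) \<le> N * E" "norm (M2 z) \<le> N * E" "norm (M3 z) \<le> N * E"
      "norm (M4 z) \<le> N * E" "norm (M5 z) \<le> N * E" "norm (M6 z) \<le> N * E"
    proof -
      have b: "norm (KD M g \<psi> z) \<le> N * E" if k: "kd M g \<psi> l" and gN: "(\<integral>w. norm (g w) \<partial>M) \<le> N" for M g \<psi>
      proof -
        have "norm (KD M g \<psi> z) \<le> exp (norm z * l) * (\<integral>w. norm (g w) \<partial>M)" by (rule kd.KD_bound[OF k])
        also have "\<dots> \<le> exp (norm z * l) * N" by (rule mult_left_mono[OF gN]) simp
        finally show ?thesis by (simp add: E_def x_def mult.commute)
      qed
      show "norm (M1 z) \<le> N * E" unfolding M1_def by (rule b[OF kds(1)]) (use n1 in \<open>simp add: N_def\<close>)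
      show "norm (M4 z) \<le> N * E" unfolding M4_def by (rule b[OF kds(2)]) (use n1 in \<open>simp add: N_def\<close>)
      show "norm (M2 z) \<le> N * E" unfolding M2_def by (rule b[OF kds(3)]) (use n1 in \<open>simp add: N_def\<close>)
      show "norm (M5 z) \<le> N * E" unfolding M5_def by (rule b[OF kds(4)]) (use n1 in \<open>simp add: N_def\<close>)
      show "norm (M3 z) \<le> N * E" unfolding M3_def by (rule b[OF kds(5)]) (use n1 in \<open>simp add: N_def\<close>)
      show "norm (M6 z) \<le> N * E" unfolding M6_def by (rule b[OF kds(6)]) (use n1 in \<open>simp add: N_def\<close>)
    qed
    have nw: "norm (\<i> * z * of_real l) = x * l" "norm (- (\<i> * z * of_real l)) = x * l"
      using l by (simp_all add: norm_mult x_def)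
    have bK: "norm (K1 z) \<le> E" "norm (K2 z) \<le> E"
      unfolding K1_def K2_def E_def using norm_dfun nw by metis+
    have "norm (GG \<alpha> z) \<le> norm (z^2 * (K1 z + K2 z)) + norm (\<i> * of_real \<alpha> * ((M1 z * K1 z + M2 z * M3 z) - (M4 z * K2 z + M5 z * M6 z)))"
      unfolding GG_def by (rule norm_triangle_ineq)
    also have "\<dots> \<le> x^2 * (E + E) + \<bar>\<alpha>\<bar> * ((N * E * E + N * E * (N * E)) + (N * E * E + N * E * (N * E)))"
    proof (rule add_mono)
      show "norm (z^2 * (K1 z + K2 z)) \<le> x^2 * (E + E)"
      proof (rule nm)
        show "norm (z^2) \<le> x^2" by (simp add: x_def norm_power)
        show "norm (K1 z + K2 z) \<le> E + E" by (rule order_trans[OF norm_triangle_ineq add_mono[OF bK]])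
      qed
      have "norm ((M1 z * K1 z + M2 z * M3 z) - (M4 z * K2 z + M5 z * M6 z)) \<le> (N * E * E + N * E * (N * E)) + (N * E * E + N * E * (N * E))"
      proof -
        have a: "norm (M1 z * K1 z + M2 z * M3 z) \<le> N * E * E + N * E * (N * E)"
          by (rule order_trans[OF norm_triangle_ineq add_mono[OF nm[OF bM(1) bK(1)] nm[OF bM(2) bM(3)]]])
        have b: "norm (M4 z * K2 z + M5 z * M6 z) \<le> N * E * E + N * E * (N * E)"
          by (rule order_trans[OF norm_triangle_ineq add_mono[OF nm[OF bM(4) bK(2)] nm[OF bM(5) bM(6)]]])
        show ?thesis by (rule order_trans[OF norm_triangle_ineq4 add_mono[OF a b]])
      qed
      thus "norm (\<i> * of_real \<alpha> * ((M1 z * K1 z + M2 z * M3 z) - (M4 z * K2 z + M5 z * M6 z))) \<le> \<bar>\<alpha>\<bar> * ((N * E * E + N * E * (N * E)) + (N * E * E + N * E * (N * E)))"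
        by (simp add: norm_mult mult_left_mono)
    qed
    also have "\<dots> = 2 * (x^2 * E) + \<bar>\<alpha>\<bar> * (2 * N + 2 * N^2) * (E * E)" by (simp add: algebra_simps power2_eq_square)
    also have "\<dots> \<le> 2 * exp (B * x) + \<bar>\<alpha>\<bar> * (2 * N + 2 * N^2) * exp (B * x)"
    proof (rule add_mono)
      have "x \<le> exp x" using exp_ge_add_one_self[of x] by linarith
      hence "x^2 \<le> (exp x)^2" using x0 by (rule power_mono)
      hence "x^2 * E \<le> (exp x)^2 * E" using E0 by (rule mult_right_mono)
      also have "\<dots> = exp ((2 + l) * x)" by (simp add: E_def power2_eq_square algebra_simps flip: exp_add)
      also have "\<dots> \<le> exp (B * x)" using l x0 by (simp add: B_def mult_right_mono)
      finally show "2 * (x^2 * E) \<le> 2 * exp (B * x)" by simp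
      have "E * E = exp (2 * l * x)" by (simp add: E_def algebra_simps flip: exp_add)
      also have "\<dots> \<le> exp (B * x)" using l x0 by (simp add: B_def mult_right_mono)
      finally show "\<bar>\<alpha>\<bar> * (2 * N + 2 * N^2) * (E * E) \<le> \<bar>\<alpha>\<bar> * (2 * N + 2 * N^2) * exp (B * x)"
        using N0 by (intro mult_left_mono) auto
    qed
    also have "\<dots> = A * exp (B * norm z)" by (simp add: A_def x_def algebra_simps)
    finally show ?thesis .
  qed
  thus ?thesis using B0 by blast
qed

lemma Delta_star: "cnj (Delta l v \<alpha> (cnj z)) = Delta l v \<alpha> z"
proof -
  have c1: "cnj (dfun (\<i> * cnj z * of_real l)) = dfun (- \<i> * z * of_real l)"
    using dfun_cnj[of "- \<i> * z * of_real l"] by simp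
  have c2: "cnj (dfun (- \<i> * cnj z * of_real l)) = dfun (\<i> * z * of_real l)"
    using dfun_cnj[of "\<i> * z * of_real l"] by simp
  have c3: "cnj (Ffun l v (cnj z)) = star (Ffun l v) z" unfolding star_def ..
  have c4: "cnj (star (Ffun l v) (cnj z)) = Ffun l v z" unfolding star_def by simp
  show ?thesis unfolding Delta_def Delta0_def
    by (simp only: complex_cnj_add complex_cnj_divide complex_cnj_mult complex_cnj_diff complex_cnj_power
       complex_cnj_cnj c1 c2 c3 c4 complex_cnj_i complex_cnj_complex_of_real) (simp add: algebra_simps; simp add: add_divide_distrib[symmetric])
qed

theorem part2: "\<exists>D. D holomorphic_on UNIV
             \<and> (\<forall>z. z \<noteq> 0 \<longrightarrow> D z = Delta l v \<alpha> z)
             \<and> (\<exists>A B. \<forall>z. norm (D z) \<le> A * exp (B * norm z))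
             \<and> (\<forall>z. D (zeta2 * z) = D z)
             \<and> (\<forall>z. star D z = D z)"
proof -
  obtain D where D: "D holomorphic_on UNIV" "\<forall>z. z \<noteq> 0 \<longrightarrow> D z = GG \<alpha> z / z^4"
    using remov[OF GG_hol GG_0 GG_deriv GG_scale] by blast
  have DD: "\<forall>z. z \<noteq> 0 \<longrightarrow> D z = Delta l v \<alpha> z" using D(2) Delta_GG by simp
  have cD: "continuous_on UNIV D" using D(1) by (rule holomorphic_on_imp_continuous_on)
  obtain A0 B0 where AB: "0 \<le> B0" "\<And>z. norm (GG \<alpha> z) \<le> A0 * exp (B0 * norm z)" using GG_bound by blast
  have "compact (D ` cball 0 1)"
    by (rule compact_continuous_image[OF continuous_on_subset[OF cD subset_UNIV] compact_cball])
  hence "bounded (D ` cball 0 1)" by (rule compact_imp_bounded)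
  then obtain K where K0: "\<forall>y\<in>D ` cball 0 1. norm y \<le> K" unfolding bounded_iff by blast
  have K: "\<And>z. z \<in> cball 0 1 \<Longrightarrow> norm (D z) \<le> K" using K0 by blast
  have K00: "0 \<le> K" using K[of 0] norm_ge_zero[of "D 0"] by (simp del: norm_ge_zero)
  have m0: "0 \<le> max K A0" using K00 by simp
  have bound: "norm (D z) \<le> max K A0 * exp (B0 * norm z)" for z
  proof (cases "norm z \<le> 1")
    case True
    hence "z \<in> cball 0 1" by simp
    hence "norm (D z) \<le> K" by (rule K)
    also have "\<dots> \<le> max K A0" by simp
    also have "\<dots> = max K A0 * 1" by simp
    also have "\<dots> \<le> max K A0 * exp (B0 * norm z)"
    proof (rule mult_left_mono[OF _ m0])
      have "0 \<le> B0 * norm z" using AB(1) by simp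
      thus "1 \<le> exp (B0 * norm z)" by simp
    qed
    finally show ?thesis .
  next
    case False
    hence z0: "z \<noteq> 0" by auto
    have z1: "1 \<le> norm z ^ 4" using False by (intro one_le_power) simp
    have "norm (D z) = norm (GG \<alpha> z) / norm z ^ 4" using D(2) z0 by (simp add: norm_divide norm_power)
    also have "\<dots> \<le> norm (GG \<alpha> z) / 1"
    proof (rule divide_left_mono[OF z1])
      show "0 \<le> norm (GG \<alpha> z)" by simp
      have "0 < norm z" using z0 by simp
      thus "0 < norm z ^ 4 * 1" by simp
    qed
    also have "\<dots> \<le> A0 * exp (B0 * norm z)" using AB(2)[of z] by simp
    also have "\<dots> \<le> max K A0 * exp (B0 * norm z)" by (rule mult_right_mono) simp_all
    finally show ?thesis .
  qed
  have rot: "D (\<zeta> * z) = D z" for z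
  proof (cases "z = 0")
    case False
    hence "\<zeta> * z \<noteq> 0" using zeta_ne0 by simp
    hence "D (\<zeta> * z) = \<zeta> * GG \<alpha> z / (\<zeta>^4 * z^4)" using D(2) GG_scale by (simp add: power_mult_distrib)
    also have "\<dots> = D z" using D(2) False zeta_ne0 by (simp add: zeta4)
    finally show ?thesis .
  qed simp
  have st1: "star D z = D z" if "z \<noteq> 0" for z
  proof -
    have "cnj z \<noteq> 0" using that by simp
    thus ?thesis unfolding star_def using DD that Delta_star by simp
  qed
  have st0: "star D 0 = D 0"
  proof -
    define s where "s n = complex_of_real (inverse (real (Suc n)))" for n
    have s0: "s n \<noteq> 0" "cnj (s n) = s n" for n
    proof -
      have "inverse (real (Suc n)) \<noteq> 0" by simp
      thus "s n \<noteq> 0" unfolding s_def of_real_eq_0_iff .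
      show "cnj (s n) = s n" unfolding s_def by (rule complex_cnj_complex_of_real)
    qed
    have "s \<longlonglongrightarrow> of_real 0" unfolding s_def by (intro tendsto_of_real LIMSEQ_inverse_real_of_nat)
    hence sl: "s \<longlonglongrightarrow> 0" by simp
    have ic: "isCont D 0" using cD continuous_on_eq_continuous_at[OF open_UNIV] by blast
    have "(\<lambda>n. D (s n)) \<longlonglongrightarrow> D 0" by (rule isCont_tendsto_compose[OF ic sl])
    moreover have "(\<lambda>n. D (s n)) \<longlonglongrightarrow> cnj (D 0)"
    proof -
      have "(\<lambda>n. cnj (D (s n))) \<longlonglongrightarrow> cnj (D 0)" using calculation by (rule tendsto_cnj)
      moreover have "cnj (D (s n)) = D (s n)" for n using st1[OF s0(1)] s0(2) unfolding star_def by metis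
      ultimately show ?thesis by simp
    qed
    ultimately have "D 0 = cnj (D 0)" by (rule LIMSEQ_unique)
    thus ?thesis unfolding star_def by simp
  qed
  have st: "star D z = D z" for z using st0 st1 by (cases "z = 0") auto
  show ?thesis using D(1) DD bound rot st by blast
qed

end


theorem lemma2p2:
  fixes l \<alpha> :: real and v :: "real \<Rightarrow> complex"
  assumes "0 < l"
    and "set_borel_measurable lborel {0..l} v"
    and "set_integrable lborel {0..l} (\<lambda>x. (norm (v x))^2)"
  shows "(\<forall>z. z \<noteq> 0 \<longrightarrow> det (coeff_matrix l v \<alpha> z) = Delta l v \<alpha> z)
       \<and> (\<exists>D. D holomorphic_on UNIV
             \<and> (\<forall>z. z \<noteq> 0 \<longrightarrow> D z = Delta l v \<alpha> z)
             \<and> (\<exists>A B. \<forall>z. norm (D z) \<le> A * exp (B * norm z))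
             \<and> (\<forall>z. D (zeta2 * z) = D z)
             \<and> (\<forall>z. star D z = D z))"
proof -
  interpret prob l v using assms by unfold_locales
  show ?thesis using part1 part2[of \<alpha>] by blast
qed

end
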